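(* Let $(G,X,\alpha)$ be a $G$-space with transitive action $\alpha$. Then there exist a $G$-space $(H,X,\gamma)$ with transitive action $\gamma$ such that $$\chi(H)\le\chi(X)\cdot\mathrm{inv}(G),\quad \mathrm{ib}(H)\le\mathrm{ib}(G),\quad w(H)\le\chi(X)\cdot\mathrm{ib}(G),$$ and an equivariant pair of maps $(\varphi,\mathrm{id}):(G,X,\alpha)\to(H,X,\gamma)$ with $\varphi$ an epimorphism.
   Context: All spaces are Tychonoff and all maps continuous. A $G$-space $(G,X,\alpha)$ is a topological group with a continuous action on $X$; transitive means $Gx=X$. An equivariant pair $(\varphi,\mathrm{id})$ is a continuous homomorphism $\varphi:G\to H$ with $\alpha(g,x)=\gamma(\varphi(g),x)$. The index of narrowness $\mathrm{ib}(G)$ is the least infinite cardinal $\tau$ such that for every neighborhood $U$ of the unit there is $A\subset G$ with $|A|\le\tau$ and $AU=G$. The invariance number $\mathrm{inv}(G)$ is the least infinite cardinal $\tau$ such that for every neighborhood $U$ of the unit there is a family $\gamma$ of at most $\tau$ neighborhoods of the unit such that for each $x\in G$ some $V\in\gamma$ satisfies $xVx^{-1}\subset U$. *)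

theory Defs
  imports "HOL-Analysis.Analysis" "HOL-Algebra.Coset"
begin

definition card_le :: "'x set \<Rightarrow> 'y set \<Rightarrow> bool" where
  "card_le A K \<longleftrightarrow> (card_of A, card_of K) \<in> ordLeq"

definition tychonoff_space :: "'a topology \<Rightarrow> bool" where
  "tychonoff_space T \<longleftrightarrow> t1_space T \<and> completely_regular_space T"

definition topological_group :: "('g, 'b) monoid_scheme \<Rightarrow> 'g topology \<Rightarrow> bool" where
  "topological_group G T \<longleftrightarrow>
     group G \<and> topspace T = carrier G \<and>
     continuous_map (prod_topology T T) T (\<lambda>(x, y). x \<otimes>\<^bsub>G\<^esub> y) \<and>
     continuous_map T T (\<lambda>x. inv\<^bsub>G\<^esub> x)"

definition unit_nbhd :: "('g, 'b) monoid_scheme \<Rightarrow> 'g topology \<Rightarrow> 'g set \<Rightarrow> bool" where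
  "unit_nbhd G T U \<longleftrightarrow> U \<subseteq> topspace T \<and> (\<exists>W. openin T W \<and> \<one>\<^bsub>G\<^esub> \<in> W \<and> W \<subseteq> U)"

definition G_space ::
  "('g, 'b) monoid_scheme \<Rightarrow> 'g topology \<Rightarrow> 'a topology \<Rightarrow> ('g \<Rightarrow> 'a \<Rightarrow> 'a) \<Rightarrow> bool" where
  "G_space G TG X \<alpha> \<longleftrightarrow>
     topological_group G TG \<and> tychonoff_space TG \<and> tychonoff_space X \<and>
     continuous_map (prod_topology TG X) X (\<lambda>(g, x). \<alpha> g x) \<and>
     (\<forall>x\<in>topspace X. \<alpha> \<one>\<^bsub>G\<^esub> x = x) \<and>
     (\<forall>g\<in>carrier G. \<forall>h\<in>carrier G. \<forall>x\<in>topspace X.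
        \<alpha> (g \<otimes>\<^bsub>G\<^esub> h) x = \<alpha> g (\<alpha> h x))"

definition transitive_action :: "('g, 'b) monoid_scheme \<Rightarrow> 'a topology \<Rightarrow> ('g \<Rightarrow> 'a \<Rightarrow> 'a) \<Rightarrow> bool" where
  "transitive_action G X \<alpha> \<longleftrightarrow> (\<forall>x\<in>topspace X. (\<lambda>g. \<alpha> g x) ` carrier G = topspace X)"

definition equivariant_pair ::
  "('g, 'b) monoid_scheme \<Rightarrow> 'g topology \<Rightarrow> ('h, 'c) monoid_scheme \<Rightarrow> 'h topology \<Rightarrow>
   'a topology \<Rightarrow> ('g \<Rightarrow> 'a \<Rightarrow> 'a) \<Rightarrow> ('h \<Rightarrow> 'a \<Rightarrow> 'a) \<Rightarrow> ('g \<Rightarrow> 'h) \<Rightarrow> bool" where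
  "equivariant_pair G TG H TH X \<alpha> \<gamma> \<phi> \<longleftrightarrow>
     \<phi> \<in> hom G H \<and> continuous_map TG TH \<phi> \<and>
     (\<forall>g\<in>carrier G. \<forall>x\<in>topspace X. \<alpha> g x = \<gamma> (\<phi> g) x)"

text \<open>Each invariant is the least infinite cardinal with a property; we express
  "invariant \<le> |K|" as: K is infinite and |K| has the property.\<close>

definition local_base_at :: "'a topology \<Rightarrow> 'a \<Rightarrow> 'a set set \<Rightarrow> bool" where
  "local_base_at T x \<B> \<longleftrightarrow>
     (\<forall>B\<in>\<B>. openin T B \<and> x \<in> B) \<and>
     (\<forall>U. openin T U \<and> x \<in> U \<longrightarrow> (\<exists>B\<in>\<B>. B \<subseteq> U))"

definition character_le :: "'a topology \<Rightarrow> 'k set \<Rightarrow> bool" where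
  "character_le T K \<longleftrightarrow> infinite K \<and>
     (\<forall>x\<in>topspace T. \<exists>\<B>. local_base_at T x \<B> \<and> card_le \<B> K)"

definition weight_le :: "'a topology \<Rightarrow> 'k set \<Rightarrow> bool" where
  "weight_le T K \<longleftrightarrow> infinite K \<and>
     (\<exists>\<B>. (\<forall>B\<in>\<B>. openin T B) \<and>
          (\<forall>U. openin T U \<longrightarrow> (\<exists>\<C>\<subseteq>\<B>. \<Union>\<C> = U)) \<and> card_le \<B> K)"

definition ib_le :: "('g, 'b) monoid_scheme \<Rightarrow> 'g topology \<Rightarrow> 'k set \<Rightarrow> bool" where
  "ib_le G T K \<longleftrightarrow> infinite K \<and>
     (\<forall>U. unit_nbhd G T U \<longrightarrow>
        (\<exists>A. A \<subseteq> carrier G \<and> card_le A K \<and> A <#>\<^bsub>G\<^esub> U = carrier G))"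

definition inv_le :: "('g, 'b) monoid_scheme \<Rightarrow> 'g topology \<Rightarrow> 'k set \<Rightarrow> bool" where
  "inv_le G T K \<longleftrightarrow> infinite K \<and>
     (\<forall>U. unit_nbhd G T U \<longrightarrow>
        (\<exists>\<gamma>. (\<forall>V\<in>\<gamma>. unit_nbhd G T V) \<and> card_le \<gamma> K \<and>
             (\<forall>x\<in>carrier G. \<exists>V\<in>\<gamma>. (x <#\<^bsub>G\<^esub> V) #>\<^bsub>G\<^esub> (inv\<^bsub>G\<^esub> x) \<subseteq> U)))"

end

theory Submission
  imports Defs
begin


locale tgrp = group G for G (structure) +
  fixes TG :: "'g topology"
  assumes topsp: "topspace TG = carrier G"
    and mcont: "continuous_map (prod_topology TG TG) TG (\<lambda>(x, y). x \<otimes> y)"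
    and icont: "continuous_map TG TG (\<lambda>x. inv x)"
begin

lemma lmul_cont: "a \<in> carrier G \<Longrightarrow> continuous_map TG TG (\<lambda>x. a \<otimes> x)"
proof -
  assume a: "a \<in> carrier G"
  have "continuous_map TG (prod_topology TG TG) (\<lambda>x. (a, x))"
    using a topsp by (auto intro!: continuous_map_pairedI)
  from continuous_map_compose[OF this mcont] show ?thesis by (simp add: o_def)
qed

lemma rmul_cont: "a \<in> carrier G \<Longrightarrow> continuous_map TG TG (\<lambda>x. x \<otimes> a)"
proof -
  assume a: "a \<in> carrier G"
  have "continuous_map TG (prod_topology TG TG) (\<lambda>x. (x, a))"
    using a topsp by (auto intro!: continuous_map_pairedI)
  from continuous_map_compose[OF this mcont] show ?thesis by (simp add: o_def)
qed

lemma open_pre: "continuous_map TG TG f \<Longrightarrow> openin TG V \<Longrightarrow> openin TG {x \<in> carrier G. f x \<in> V}"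
  using topsp by (metis openin_continuous_map_preimage)

lemma open_lcos:
  assumes a: "a \<in> carrier G" and V: "openin TG V"
  shows "openin TG ((\<lambda>v. a \<otimes> v) ` V)"
proof -
  have Vc: "V \<subseteq> carrier G" using openin_subset[OF V] topsp by auto
  have "(\<lambda>v. a \<otimes> v) ` V = {x \<in> carrier G. inv a \<otimes> x \<in> V}"
  proof safe
    fix v assume "v \<in> V" thus "a \<otimes> v \<in> carrier G" "inv a \<otimes> (a \<otimes> v) \<in> V"
      using Vc a by (auto simp: m_assoc[symmetric])
  next
    fix x assume "x \<in> carrier G" "inv a \<otimes> x \<in> V"
    thus "x \<in> (\<lambda>v. a \<otimes> v) ` V" using a
      by (intro image_eqI[of _ _ "inv a \<otimes> x"]) (auto simp: m_assoc[symmetric])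
  qed
  thus ?thesis using open_pre[OF lmul_cont V] a by simp
qed

lemma open_conj:
  assumes x: "x \<in> carrier G" and V: "openin TG V"
  shows "openin TG {w \<in> carrier G. x \<otimes> w \<otimes> inv x \<in> V}"
proof -
  have "continuous_map TG TG (\<lambda>w. x \<otimes> w \<otimes> inv x)"
    using continuous_map_compose[OF lmul_cont[OF x] rmul_cont[of "inv x"]] x by (simp add: o_def)
  thus ?thesis using open_pre V by blast
qed

lemma open_invimg:
  assumes V: "openin TG V"
  shows "openin TG ((\<lambda>v. inv v) ` V)"
proof -
  have Vc: "V \<subseteq> carrier G" using openin_subset[OF V] topsp by auto
  have "(\<lambda>v. inv v) ` V = {x \<in> carrier G. inv x \<in> V}"
    using Vc by (auto intro!: image_eqI)
  thus ?thesis using open_pre[OF icont V] by simp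
qed

lemma sq_root:
  assumes V: "openin TG V" "\<one> \<in> V"
  shows "\<exists>W. openin TG W \<and> \<one> \<in> W \<and> (\<forall>a\<in>W. \<forall>b\<in>W. a \<otimes> b \<in> V)"
proof -
  define S where "S = {p \<in> topspace (prod_topology TG TG). (\<lambda>(x, y). x \<otimes> y) p \<in> V}"
  have o: "openin (prod_topology TG TG) S"
    unfolding S_def using openin_continuous_map_preimage[OF mcont V(1)] .
  have m: "(\<one>, \<one>) \<in> S"
    using V topsp by (simp add: S_def)
  obtain A B where AB: "openin TG A" "openin TG B" "\<one> \<in> A" "\<one> \<in> B" "A \<times> B \<subseteq> S"
    using o m unfolding openin_prod_topology_alt by meson
  have "\<forall>a\<in>A \<inter> B. \<forall>b\<in>A \<inter> B. a \<otimes> b \<in> V"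
  proof (intro ballI)
    fix a b assume "a \<in> A \<inter> B" "b \<in> A \<inter> B"
    hence "(a, b) \<in> S" using AB(5) by blast
    thus "a \<otimes> b \<in> V" by (simp add: S_def)
  qed
  moreover have "openin TG (A \<inter> B)" using AB by (simp add: openin_Int)
  ultimately show ?thesis using AB(3,4) by blast
qed

lemma cube_root:
  assumes V: "openin TG V" "\<one> \<in> V"
  shows "\<exists>W. openin TG W \<and> \<one> \<in> W \<and> (\<forall>a\<in>W. \<forall>b\<in>W. \<forall>c\<in>W. a \<otimes> b \<otimes> c \<in> V)"
proof -
  obtain W1 where W1: "openin TG W1" "\<one> \<in> W1" "\<forall>a\<in>W1. \<forall>b\<in>W1. a \<otimes> b \<in> V"
    using sq_root[OF V] by blast
  obtain W2 where W2: "openin TG W2" "\<one> \<in> W2" "\<forall>a\<in>W2. \<forall>b\<in>W2. a \<otimes> b \<in> W1"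
    using sq_root[OF W1(1,2)] by blast
  have c: "W2 \<subseteq> carrier G" using openin_subset[OF W2(1)] topsp by auto
  show ?thesis
  proof (intro exI[of _ "W1 \<inter> W2"] conjI ballI)
    fix a b c assume "a \<in> W1 \<inter> W2" "b \<in> W1 \<inter> W2" "c \<in> W1 \<inter> W2"
    thus "a \<otimes> b \<otimes> c \<in> V" using W1(3) W2(3) by (meson IntD1 IntD2)
  qed (use W1 W2 in \<open>auto intro: openin_Int\<close>)
qed

end


locale vfam = tgrp G TG for G (structure) and TG +
  fixes VV :: "'g set set"
  assumes V_open: "V \<in> VV \<Longrightarrow> openin TG V"
    and V_one: "V \<in> VV \<Longrightarrow> \<one> \<in> V"
    and V_int: "A \<in> VV \<Longrightarrow> B \<in> VV \<Longrightarrow> A \<inter> B \<in> VV"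
    and V_inv: "V \<in> VV \<Longrightarrow> (\<lambda>v. inv v) ` V \<in> VV"
    and V_cube: "V \<in> VV \<Longrightarrow> \<exists>W\<in>VV. \<forall>a\<in>W. \<forall>b\<in>W. \<forall>c\<in>W. a \<otimes> b \<otimes> c \<in> V"
    and V_conj: "V \<in> VV \<Longrightarrow> x \<in> carrier G \<Longrightarrow> \<exists>W\<in>VV. \<forall>w\<in>W. x \<otimes> w \<otimes> inv x \<in> V"
    and V_G: "carrier G \<in> VV"
begin

lemma V_sub: "V \<in> VV \<Longrightarrow> V \<subseteq> carrier G"
  using openin_subset[OF V_open] topsp by auto

lemma V_mem: "V \<in> VV \<Longrightarrow> v \<in> V \<Longrightarrow> v \<in> carrier G"
  using V_sub by auto

lemma V_sym_root:
  assumes V: "V \<in> VV"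
  shows "\<exists>W\<in>VV. (\<forall>a\<in>W. inv a \<in> W) \<and> (\<forall>a\<in>W. \<forall>b\<in>W. \<forall>c\<in>W. a \<otimes> b \<otimes> c \<in> V) \<and> W \<subseteq> V"
proof -
  obtain W0 where W0: "W0 \<in> VV" "\<forall>a\<in>W0. \<forall>b\<in>W0. \<forall>c\<in>W0. a \<otimes> b \<otimes> c \<in> V"
    using V_cube[OF V] by blast
  define W where "W = W0 \<inter> (\<lambda>v. inv v) ` W0"
  have WV: "W \<in> VV" unfolding W_def using W0 V_int V_inv by blast
  have s: "\<forall>a\<in>W. inv a \<in> W"
  proof
    fix a assume a: "a \<in> W"
    then obtain b where b: "b \<in> W0" "a = inv b" "a \<in> W0" unfolding W_def by blast
    have "b \<in> carrier G" using V_mem W0(1) b by blast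
    hence "inv a = b" using b by simp
    thus "inv a \<in> W" unfolding W_def using b by blast
  qed
  have c: "\<forall>a\<in>W. \<forall>b\<in>W. \<forall>c\<in>W. a \<otimes> b \<otimes> c \<in> V" using W0 unfolding W_def by blast
  have "W \<subseteq> V"
  proof
    fix a assume a: "a \<in> W"
    have "\<one> \<in> W" using V_one WV by blast
    hence "a \<otimes> \<one> \<otimes> \<one> \<in> V" using c a by blast
    moreover have "a \<in> carrier G" using a V_mem WV by blast
    ultimately show "a \<in> V" by simp
  qed
  thus ?thesis using WV s c by blast
qed

lemma V_sq:
  assumes V: "V \<in> VV"
  shows "\<exists>W\<in>VV. (\<forall>a\<in>W. inv a \<in> W) \<and> (\<forall>a\<in>W. \<forall>b\<in>W. a \<otimes> b \<in> V) \<and> W \<subseteq> V"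
proof -
  obtain W where W: "W\<in>VV" "(\<forall>a\<in>W. inv a \<in> W)" "(\<forall>a\<in>W. \<forall>b\<in>W. \<forall>c\<in>W. a \<otimes> b \<otimes> c \<in> V)" "W \<subseteq> V"
    using V_sym_root[OF V] by blast
  have "\<forall>a\<in>W. \<forall>b\<in>W. a \<otimes> b \<in> V"
  proof (intro ballI)
    fix a b assume "a \<in> W" "b \<in> W"
    moreover have "\<one> \<in> W" using V_one W(1) by blast
    ultimately have "a \<otimes> b \<otimes> \<one> \<in> V" using W(3) by blast
    moreover have "a \<in> carrier G" "b \<in> carrier G" using \<open>a \<in> W\<close> \<open>b \<in> W\<close> V_mem W(1) by blast+
    ultimately show "a \<otimes> b \<in> V" by simp
  qed
  thus ?thesis using W by blast
qed

definition MM where "MM = \<Inter> VV"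

lemma MM_sub_V: "V \<in> VV \<Longrightarrow> MM \<subseteq> V" unfolding MM_def by blast

lemma MM_carrier: "MM \<subseteq> carrier G" using MM_sub_V V_G by blast

lemma MM_normal: "MM \<lhd> G"
proof -
  have sg: "subgroup MM G"
  proof
    show "MM \<subseteq> carrier G" by (rule MM_carrier)
    show "\<one> \<in> MM" unfolding MM_def using V_one by blast
  next
    fix a b assume ab: "a \<in> MM" "b \<in> MM"
    show "a \<otimes> b \<in> MM" unfolding MM_def
    proof
      fix V assume V: "V \<in> VV"
      obtain W where W: "W\<in>VV" "\<forall>a\<in>W. \<forall>b\<in>W. a \<otimes> b \<in> V" using V_sq[OF V] by blast
      thus "a \<otimes> b \<in> V" using ab MM_sub_V by blast
    qed
  next
    fix a assume a: "a \<in> MM"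
    show "inv a \<in> MM" unfolding MM_def
    proof
      fix V assume V: "V \<in> VV"
      have "a \<in> (\<lambda>v. inv v) ` V" using a MM_sub_V V_inv[OF V] by blast
      then obtain v where "v \<in> V" "a = inv v" by blast
      moreover have "v \<in> carrier G" using V_mem V \<open>v \<in> V\<close> by blast
      ultimately show "inv a \<in> V" by simp
    qed
  qed
  show ?thesis unfolding normal_inv_iff
  proof (intro conjI sg ballI)
    fix x h assume x: "x \<in> carrier G" and h: "h \<in> MM"
    show "x \<otimes> h \<otimes> inv x \<in> MM" unfolding MM_def
    proof
      fix V assume V: "V \<in> VV"
      obtain W where "W\<in>VV" "\<forall>w\<in>W. x \<otimes> w \<otimes> inv x \<in> V" using V_conj[OF V x] by blast
      thus "x \<otimes> h \<otimes> inv x \<in> V" using h MM_sub_V by blast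
    qed
  qed
qed

lemma MM_sg: "subgroup MM G" using MM_normal normal_imp_subgroup by blast

abbreviation HH where "HH \<equiv> G Mod MM"
definition phi where "phi a = MM #> a"

lemma HH_group: "group HH" using normal.factorgroup_is_group[OF MM_normal] .

lemma phi_hom: "phi \<in> hom G HH"
  unfolding phi_def using normal.r_coset_hom_Mod[OF MM_normal] .

lemma carrier_HH: "carrier HH = phi ` carrier G"
  unfolding phi_def carrier_FactGroup by simp

lemma phi_in: "a \<in> carrier G \<Longrightarrow> phi a \<in> carrier HH"
  using carrier_HH by blast

lemma phi_mult: "a \<in> carrier G \<Longrightarrow> b \<in> carrier G \<Longrightarrow> phi a \<otimes>\<^bsub>HH\<^esub> phi b = phi (a \<otimes> b)"
  using phi_hom by (simp add: hom_mult)

lemma phi_one: "phi \<one> = \<one>\<^bsub>HH\<^esub>"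
  unfolding phi_def using coset_mult_one[OF MM_carrier] by simp

lemma phi_inv: "a \<in> carrier G \<Longrightarrow> inv\<^bsub>HH\<^esub> (phi a) = phi (inv a)"
  using group_hom.hom_inv[of G HH phi a] phi_hom HH_group
  by (simp add: group_hom_def group_hom_axioms_def is_group)

lemma phi_eqD:
  assumes a: "a \<in> carrier G" and b: "b \<in> carrier G" and e: "phi a = phi b"
  shows "inv a \<otimes> b \<in> MM"
proof -
  have "b \<in> MM #> a" using e rcos_self[OF b MM_sg] unfolding phi_def by simp
  hence "b \<otimes> inv a \<in> MM" using subgroup.rcos_module_imp[OF MM_sg is_group a] by blast
  hence "inv a \<otimes> (b \<otimes> inv a) \<otimes> inv (inv a) \<in> MM"
    using MM_normal unfolding normal_inv_iff using a by blast
  thus ?thesis using a b by (simp add: m_assoc)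
qed

lemma phi_eqI:
  assumes a: "a \<in> carrier G" and m: "m \<in> MM"
  shows "phi (a \<otimes> m) = phi a"
proof -
  have mc: "m \<in> carrier G" using m MM_carrier by blast
  have "a \<otimes> m \<otimes> inv a \<in> MM" using MM_normal a m unfolding normal_inv_iff by blast
  hence "a \<otimes> m \<in> MM #> a"
    using subgroup.rcos_module_rev[OF MM_sg is_group a] a mc by simp
  thus ?thesis unfolding phi_def using repr_independence[OF _ a MM_sg] by simp
qed

end


lemma cont_pt:
  assumes "\<And>x. x \<in> topspace A \<Longrightarrow> f x \<in> topspace B"
    and "\<And>x U. x \<in> topspace A \<Longrightarrow> openin B U \<Longrightarrow> f x \<in> U \<Longrightarrow> \<exists>W. openin A W \<and> x \<in> W \<and> (\<forall>y\<in>W. f y \<in> U)"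
  shows "continuous_map A B f"
  unfolding continuous_map_def
proof (intro conjI allI impI)
  show "f \<in> topspace A \<rightarrow> topspace B" using assms(1) by blast
next
  fix U assume U: "openin B U"
  show "openin A {x \<in> topspace A. f x \<in> U}"
  proof (subst openin_subopen, intro ballI)
    fix x assume x: "x \<in> {x \<in> topspace A. f x \<in> U}"
    then obtain W where W: "openin A W" "x \<in> W" "\<forall>y\<in>W. f y \<in> U" using assms(2) U by blast
    have "W \<subseteq> topspace A" using openin_subset[OF W(1)] .
    thus "\<exists>T. openin A T \<and> x \<in> T \<and> T \<subseteq> {x \<in> topspace A. f x \<in> U}" using W by blast
  qed
qed

context vfam begin

lemma cancel1: "h \<in> carrier G \<Longrightarrow> y \<in> carrier G \<Longrightarrow> h \<otimes> (inv h \<otimes> y) = y"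
  by (simp add: m_assoc[symmetric])
lemma cancel2: "h \<in> carrier G \<Longrightarrow> y \<in> carrier G \<Longrightarrow> inv h \<otimes> (h \<otimes> y) = y"
  by (simp add: m_assoc[symmetric])

definition opn where "opn S \<longleftrightarrow> S \<subseteq> carrier G \<and> (\<forall>g\<in>S. \<exists>V\<in>VV. \<forall>v\<in>V. g \<otimes> v \<in> S)"
definition pre where "pre U = {g \<in> carrier G. phi g \<in> U}"
definition Intr where "Intr S = {g \<in> carrier G. \<exists>V\<in>VV. \<forall>v\<in>V. g \<otimes> v \<in> S}"
definition lc where "lc g V = (\<lambda>v. g \<otimes> v) ` V"
definition TH where "TH = topology (\<lambda>U. U \<subseteq> carrier HH \<and> opn (pre U))"

lemma istop: "istopology (\<lambda>U. U \<subseteq> carrier HH \<and> opn (pre U))"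
  unfolding istopology_def
proof (rule conjI; intro allI impI)
  fix S T assume a: "S \<subseteq> carrier HH \<and> opn (pre S)" "T \<subseteq> carrier HH \<and> opn (pre T)"
  have "opn (pre (S \<inter> T))" unfolding opn_def
  proof (intro conjI ballI)
    show "pre (S \<inter> T) \<subseteq> carrier G" unfolding pre_def by blast
  next
    fix g assume g: "g \<in> pre (S \<inter> T)"
    hence "g \<in> pre S" "g \<in> pre T" unfolding pre_def by auto
    then obtain V1 V2 where "V1 \<in> VV" "\<forall>v\<in>V1. g \<otimes> v \<in> pre S" "V2 \<in> VV" "\<forall>v\<in>V2. g \<otimes> v \<in> pre T"
      using a unfolding opn_def by meson
    thus "\<exists>V\<in>VV. \<forall>v\<in>V. g \<otimes> v \<in> pre (S \<inter> T)"
      by (intro bexI[of _ "V1 \<inter> V2"]) (auto simp: pre_def V_int)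
  qed
  thus "(S \<inter> T) \<subseteq> carrier HH \<and> opn (pre (S \<inter> T))" using a by blast
next
  fix K assume a: "\<forall>U\<in>K. U \<subseteq> carrier HH \<and> opn (pre U)"
  have "opn (pre (\<Union>K))" unfolding opn_def
  proof (intro conjI ballI)
    show "pre (\<Union>K) \<subseteq> carrier G" unfolding pre_def by blast
  next
    fix g assume g: "g \<in> pre (\<Union>K)"
    then obtain U where U: "U \<in> K" "g \<in> pre U" unfolding pre_def by blast
    then obtain V where "V \<in> VV" "\<forall>v\<in>V. g \<otimes> v \<in> pre U" using a unfolding opn_def by meson
    thus "\<exists>V\<in>VV. \<forall>v\<in>V. g \<otimes> v \<in> pre (\<Union>K)" using U(1) unfolding pre_def by blast
  qed
  thus "\<Union>K \<subseteq> carrier HH \<and> opn (pre (\<Union>K))" using a by blast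
qed

lemma openin_TH: "openin TH U \<longleftrightarrow> U \<subseteq> carrier HH \<and> opn (pre U)"
  unfolding TH_def using topology_inverse'[OF istop] by simp

lemma opn_G: "opn (carrier G)"
  unfolding opn_def using V_G V_mem by blast

lemma pre_carrier: "pre (carrier HH) = carrier G"
  unfolding pre_def using phi_in by blast

lemma topspace_TH: "topspace TH = carrier HH"
proof -
  have "openin TH (carrier HH)" unfolding openin_TH pre_carrier using opn_G by simp
  hence "carrier HH \<subseteq> topspace TH" using openin_subset by blast
  moreover have "topspace TH \<subseteq> carrier HH"
    using openin_TH openin_topspace by blast
  ultimately show ?thesis by blast
qed

lemma opn_sat:
  assumes S: "opn S" and s: "s \<in> S" and s': "s' \<in> carrier G" and e: "phi s' = phi s"
  shows "s' \<in> S"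
proof -
  have sc: "s \<in> carrier G" using S s unfolding opn_def by blast
  obtain V where V: "V \<in> VV" "\<forall>v\<in>V. s \<otimes> v \<in> S" using S s unfolding opn_def by blast
  have "inv s \<otimes> s' \<in> MM" using phi_eqD[OF sc s'] e by simp
  hence "s \<otimes> (inv s \<otimes> s') \<in> S" using V MM_sub_V by blast
  thus ?thesis using sc s' by (simp add: m_assoc[symmetric])
qed

lemma pre_img: "opn S \<Longrightarrow> pre (phi ` S) = S"
  unfolding pre_def using opn_sat unfolding opn_def by blast

lemma open_img: "opn S \<Longrightarrow> openin TH (phi ` S)"
  unfolding openin_TH using pre_img phi_in unfolding opn_def by auto

lemma Intr_opn: "opn (Intr S)"
  unfolding opn_def
proof (intro conjI ballI)
  show "Intr S \<subseteq> carrier G" unfolding Intr_def by blast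
next
  fix g assume g: "g \<in> Intr S"
  then obtain V where V: "V \<in> VV" "\<forall>v\<in>V. g \<otimes> v \<in> S" and gc: "g \<in> carrier G" unfolding Intr_def by blast
  obtain W where W: "W\<in>VV" "\<forall>a\<in>W. \<forall>b\<in>W. a \<otimes> b \<in> V" using V_sq[OF V(1)] by blast
  show "\<exists>V\<in>VV. \<forall>v\<in>V. g \<otimes> v \<in> Intr S"
  proof (intro bexI[OF _ W(1)] ballI)
    fix w assume w: "w \<in> W"
    have wc: "w \<in> carrier G" using V_mem W(1) w by blast
    have "\<forall>u\<in>W. g \<otimes> w \<otimes> u \<in> S"
    proof
      fix u assume u: "u \<in> W"
      have "g \<otimes> (w \<otimes> u) \<in> S" using V W w u by blast
      thus "g \<otimes> w \<otimes> u \<in> S" using gc wc V_mem[OF W(1) u] by (simp add: m_assoc)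
    qed
    thus "g \<otimes> w \<in> Intr S" unfolding Intr_def using W(1) gc wc by blast
  qed
qed

lemma Intr_sub: "Intr S \<subseteq> S"
proof
  fix g assume "g \<in> Intr S"
  then obtain V where "V \<in> VV" "\<forall>v\<in>V. g \<otimes> v \<in> S" "g \<in> carrier G" unfolding Intr_def by blast
  thus "g \<in> S" using V_one by force
qed

lemma Intr_lc: "g \<in> carrier G \<Longrightarrow> V \<in> VV \<Longrightarrow> g \<in> Intr (lc g V)"
  unfolding Intr_def lc_def by blast

lemma lc_mem: "x \<in> lc g V \<Longrightarrow> \<exists>v\<in>V. x = g \<otimes> v"
  unfolding lc_def by blast

lemma open_nb: "g \<in> carrier G \<Longrightarrow> V \<in> VV \<Longrightarrow> openin TH (phi ` Intr (lc g V)) \<and> phi g \<in> phi ` Intr (lc g V)"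
  using open_img[OF Intr_opn] Intr_lc by blast

lemma nb_elem:
  assumes "C \<in> phi ` Intr (lc g V)"
  shows "\<exists>v\<in>V. C = phi (g \<otimes> v)"
  using assms Intr_sub lc_mem by blast

lemma opn_TG: "opn S \<Longrightarrow> openin TG S"
proof -
  assume S: "opn S"
  show "openin TG S"
  proof (subst openin_subopen, intro ballI)
    fix g assume g: "g \<in> S"
    then obtain V where V: "V \<in> VV" "\<forall>v\<in>V. g \<otimes> v \<in> S" and gc: "g \<in> carrier G"
      using S unfolding opn_def by blast
    have "openin TG (lc g V)" unfolding lc_def using open_lcos[OF gc V_open[OF V(1)]] .
    moreover have "g \<in> lc g V" unfolding lc_def using V_one[OF V(1)] gc by force
    moreover have "lc g V \<subseteq> S" unfolding lc_def using V by blast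
    ultimately show "\<exists>T. openin TG T \<and> g \<in> T \<and> T \<subseteq> S" by blast
  qed
qed

lemma TH_nb:
  assumes U: "openin TH U" and g: "g \<in> carrier G" and gU: "phi g \<in> U"
  shows "\<exists>V\<in>VV. \<forall>v\<in>V. phi (g \<otimes> v) \<in> U"
proof -
  have "opn (pre U)" "g \<in> pre U" using U g gU unfolding openin_TH pre_def by auto
  then obtain V where "V\<in>VV" "\<forall>v\<in>V. g \<otimes> v \<in> pre U" unfolding opn_def by blast
  thus ?thesis unfolding pre_def by blast
qed

lemma phi_cont: "continuous_map TG TH phi"
  unfolding continuous_map_def
proof (intro conjI allI impI)
  show "phi \<in> topspace TG \<rightarrow> topspace TH" using phi_in topsp topspace_TH by auto
next
  fix U assume "openin TH U"
  hence "opn (pre U)" unfolding openin_TH by blast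
  hence "openin TG (pre U)" by (rule opn_TG)
  moreover have "pre U = {x \<in> topspace TG. phi x \<in> U}" unfolding pre_def topsp by simp
  ultimately show "openin TG {x \<in> topspace TG. phi x \<in> U}" by simp
qed

lemma HH_elem: "C \<in> carrier HH \<Longrightarrow> \<exists>g\<in>carrier G. C = phi g"
  using carrier_HH by blast

lemma mult_cont: "continuous_map (prod_topology TH TH) TH (\<lambda>(x, y). x \<otimes>\<^bsub>HH\<^esub> y)"
proof (rule cont_pt)
  fix p assume p: "p \<in> topspace (prod_topology TH TH)"
  obtain C D where "p = (C, D)" by (cases p)
  moreover have "C \<in> carrier HH" "D \<in> carrier HH" using p calculation topspace_TH by auto
  ultimately show "(\<lambda>(x, y). x \<otimes>\<^bsub>HH\<^esub> y) p \<in> topspace TH"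
    using monoid.m_closed[OF group.is_monoid[OF HH_group]] topspace_TH by simp
next
  fix p U assume p: "p \<in> topspace (prod_topology TH TH)" and U: "openin TH U"
    and pU: "(\<lambda>(x, y). x \<otimes>\<^bsub>HH\<^esub> y) p \<in> U"
  obtain C D where pCD: "p = (C, D)" by (cases p)
  have CD: "C \<in> carrier HH" "D \<in> carrier HH" using p pCD topspace_TH by auto
  obtain g where g: "g \<in> carrier G" "C = phi g" using HH_elem[OF CD(1)] by blast
  obtain h where h: "h \<in> carrier G" "D = phi h" using HH_elem[OF CD(2)] by blast
  have "phi (g \<otimes> h) \<in> U" using pU pCD g h phi_mult by simp
  then obtain V where V: "V \<in> VV" "\<forall>v\<in>V. phi (g \<otimes> h \<otimes> v) \<in> U"
    using TH_nb[OF U] g h by blast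
  obtain V1 where V1: "V1\<in>VV" "\<forall>a\<in>V1. \<forall>b\<in>V1. a \<otimes> b \<in> V" using V_sq[OF V(1)] by blast
  obtain V2 where V2: "V2\<in>VV" "\<forall>w\<in>V2. inv h \<otimes> w \<otimes> inv (inv h) \<in> V1"
    using V_conj[OF V1(1)] h by blast
  define V3 where "V3 = V1 \<inter> V2"
  have V3: "V3 \<in> VV" unfolding V3_def using V1 V2 V_int by blast
  define W1 where "W1 = phi ` Intr (lc g V3)"
  define W2 where "W2 = phi ` Intr (lc h V3)"
  have o1: "openin TH W1" "C \<in> W1" unfolding W1_def using open_nb[OF g(1) V3] g(2) by auto
  have o2: "openin TH W2" "D \<in> W2" unfolding W2_def using open_nb[OF h(1) V3] h(2) by auto
  have "openin (prod_topology TH TH) (W1 \<times> W2)" using o1(1) o2(1) by (rule openin_prod_Times_iff[THEN iffD2, OF disjI2, OF disjI2, OF conjI])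
  moreover have "p \<in> W1 \<times> W2" unfolding pCD using o1(2) o2(2) by blast
  moreover have "\<forall>q\<in>W1 \<times> W2. (\<lambda>(x, y). x \<otimes>\<^bsub>HH\<^esub> y) q \<in> U"
  proof
    fix q assume q: "q \<in> W1 \<times> W2"
    then obtain C' D' where q': "q = (C', D')" "C' \<in> W1" "D' \<in> W2" by blast
    obtain v where v: "v \<in> V3" "C' = phi (g \<otimes> v)" using nb_elem q'(2) unfolding W1_def by blast
    obtain w where w: "w \<in> V3" "D' = phi (h \<otimes> w)" using nb_elem q'(3) unfolding W2_def by blast
    have vc: "v \<in> carrier G" using v(1) V3 V_mem by blast
    have wc: "w \<in> carrier G" using w(1) V3 V_mem by blast
    have c1: "inv h \<otimes> v \<otimes> inv (inv h) \<in> V1" using V2(2) v(1) unfolding V3_def by blast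
    hence c1': "inv h \<otimes> v \<otimes> h \<in> V1" using h(1) by simp
    have c2: "w \<in> V1" using w(1) unfolding V3_def by blast
    have "(inv h \<otimes> v \<otimes> h) \<otimes> w \<in> V" using V1(2) c1' c2 by blast
    hence "phi (g \<otimes> h \<otimes> ((inv h \<otimes> v \<otimes> h) \<otimes> w)) \<in> U" using V(2) by blast
    moreover have "g \<otimes> h \<otimes> ((inv h \<otimes> v \<otimes> h) \<otimes> w) = (g \<otimes> v) \<otimes> (h \<otimes> w)"
      using g(1) h(1) vc wc by (simp add: m_assoc cancel1)
    moreover have "phi (g \<otimes> v) \<otimes>\<^bsub>HH\<^esub> phi (h \<otimes> w) = phi ((g \<otimes> v) \<otimes> (h \<otimes> w))"
      using g(1) h(1) vc wc by (intro phi_mult m_closed)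
    ultimately show "(\<lambda>(x, y). x \<otimes>\<^bsub>HH\<^esub> y) q \<in> U" using q'(1) v(2) w(2) by simp
  qed
  ultimately show "\<exists>W. openin (prod_topology TH TH) W \<and> p \<in> W \<and> (\<forall>y\<in>W. (\<lambda>(x, y). x \<otimes>\<^bsub>HH\<^esub> y) y \<in> U)"
    by blast
qed

lemma inv_cont: "continuous_map TH TH (\<lambda>x. inv\<^bsub>HH\<^esub> x)"
proof (rule cont_pt)
  fix C assume "C \<in> topspace TH"
  thus "inv\<^bsub>HH\<^esub> C \<in> topspace TH" using topspace_TH group.inv_closed[OF HH_group] by simp
next
  fix C U assume C: "C \<in> topspace TH" and U: "openin TH U" and CU: "inv\<^bsub>HH\<^esub> C \<in> U"
  obtain g where g: "g \<in> carrier G" "C = phi g" using C topspace_TH HH_elem by auto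
  have "phi (inv g) \<in> U" using CU g phi_inv by simp
  then obtain V where V: "V \<in> VV" "\<forall>v\<in>V. phi (inv g \<otimes> v) \<in> U"
    using TH_nb[OF U] g by blast
  obtain V2 where V2: "V2\<in>VV" "\<forall>w\<in>V2. g \<otimes> w \<otimes> inv g \<in> V"
    using V_conj[OF V(1)] g by blast
  define V3 where "V3 = (\<lambda>v. inv v) ` V2"
  have V3: "V3 \<in> VV" unfolding V3_def using V_inv V2 by blast
  define W where "W = phi ` Intr (lc g V3)"
  have "openin TH W" "C \<in> W" unfolding W_def using open_nb[OF g(1) V3] g by auto
  moreover have "\<forall>D\<in>W. inv\<^bsub>HH\<^esub> D \<in> U"
  proof
    fix D assume "D \<in> W"
    then obtain v where v: "v \<in> V3" "D = phi (g \<otimes> v)" unfolding W_def using nb_elem by blast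
    obtain u where u: "u \<in> V2" "v = inv u" using v unfolding V3_def by blast
    have uc: "u \<in> carrier G" using V_mem V2 u by blast
    have "phi (inv g \<otimes> (g \<otimes> u \<otimes> inv g)) \<in> U" using V V2 u by blast
    moreover have "inv g \<otimes> (g \<otimes> u \<otimes> inv g) = inv (g \<otimes> v)"
      using g uc u by (simp add: m_assoc[symmetric] inv_mult_group)
    ultimately show "inv\<^bsub>HH\<^esub> D \<in> U" using v phi_inv g uc u by simp
  qed
  ultimately show "\<exists>W. openin TH W \<and> C \<in> W \<and> (\<forall>y\<in>W. inv\<^bsub>HH\<^esub> y \<in> U)" by blast
qed

lemma t1_TH: "t1_space TH"
  unfolding t1_space_def
proof (intro ballI impI)
  fix C D assume C: "C \<in> topspace TH" and D: "D \<in> topspace TH" and ne: "C \<noteq> D"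
  obtain g where g: "g \<in> carrier G" "C = phi g" using C topspace_TH HH_elem by auto
  obtain h where h: "h \<in> carrier G" "D = phi h" using D topspace_TH HH_elem by auto
  have "inv g \<otimes> h \<notin> MM"
  proof
    assume "inv g \<otimes> h \<in> MM"
    hence "phi (g \<otimes> (inv g \<otimes> h)) = phi g" using phi_eqI g by blast
    thus False using ne g h by (simp add: m_assoc[symmetric])
  qed
  then obtain V where V: "V \<in> VV" "inv g \<otimes> h \<notin> V" unfolding MM_def by blast
  obtain W where W: "W\<in>VV" "\<forall>a\<in>W. inv a \<in> W" "\<forall>a\<in>W. \<forall>b\<in>W. a \<otimes> b \<in> V" "W \<subseteq> V"
    using V_sq[OF V(1)] by blast
  define Ob where "Ob = phi ` Intr (lc g W)"
  have "openin TH Ob" "C \<in> Ob" unfolding Ob_def using open_nb[OF g(1) W(1)] g by auto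
  moreover have "D \<notin> Ob"
  proof
    assume "D \<in> Ob"
    then obtain w where w: "w \<in> W" "phi h = phi (g \<otimes> w)" unfolding Ob_def using nb_elem h by blast
    have wc: "w \<in> carrier G" using V_mem W(1) w(1) by blast
    have "inv (g \<otimes> w) \<otimes> h \<in> MM" using phi_eqD[of "g \<otimes> w" h] w g h wc by simp
    hence m: "inv (g \<otimes> w) \<otimes> h \<in> W" using MM_sub_V W(1) by blast
    have "w \<otimes> (inv (g \<otimes> w) \<otimes> h) \<in> V" using W(3) w(1) m by blast
    moreover have "w \<otimes> (inv (g \<otimes> w) \<otimes> h) = inv g \<otimes> h"
      using g h wc by (simp add: inv_mult_group m_assoc[symmetric])
    ultimately show False using V(2) by simp
  qed
  ultimately show "\<exists>U. openin TH U \<and> C \<in> U \<and> D \<notin> U" by blast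
qed

end


locale pchain = group G for G (structure) +
  fixes Vs :: "nat \<Rightarrow> 'g set"
  assumes Vs_sub: "Vs n \<subseteq> carrier G"
    and Vs_one: "\<one> \<in> Vs n"
    and Vs_cube: "a \<in> Vs (Suc n) \<Longrightarrow> b \<in> Vs (Suc n) \<Longrightarrow> c \<in> Vs (Suc n) \<Longrightarrow> a \<otimes> b \<otimes> c \<in> Vs n"
    and Vs_sym: "a \<in> Vs (Suc n) \<Longrightarrow> inv a \<in> Vs (Suc n)"
begin

lemma Vs_Suc: "Vs (Suc n) \<subseteq> Vs n"
proof
  fix a assume a: "a \<in> Vs (Suc n)"
  have "a \<otimes> \<one> \<otimes> \<one> \<in> Vs n" using Vs_cube[OF a Vs_one Vs_one] .
  moreover have "a \<in> carrier G" using a Vs_sub by blast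
  ultimately show "a \<in> Vs n" by simp
qed

lemma Vs_mono: "n \<le> m \<Longrightarrow> Vs m \<subseteq> Vs n"
  by (induction m rule: dec_induct) (use Vs_Suc in auto)

definition valid :: "(nat \<times> 'g) list \<Rightarrow> bool" where
  "valid ps \<longleftrightarrow> (\<forall>p\<in>set ps. snd p \<in> Vs (fst p))"
definition lprod :: "(nat \<times> 'g) list \<Rightarrow> 'g" where
  "lprod ps = foldr (\<lambda>p acc. snd p \<otimes> acc) ps \<one>"
definition wt :: "(nat \<times> 'g) list \<Rightarrow> real" where
  "wt ps = sum_list (map (\<lambda>p. (1/2::real) ^ fst p) ps)"

lemma valid_append[simp]: "valid (xs @ ys) \<longleftrightarrow> valid xs \<and> valid ys"
  unfolding valid_def by auto
lemma valid_Cons[simp]: "valid (p # xs) \<longleftrightarrow> snd p \<in> Vs (fst p) \<and> valid xs"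
  unfolding valid_def by auto
lemma valid_Nil[simp]: "valid []" unfolding valid_def by auto

lemma lprod_carrier: "valid ps \<Longrightarrow> lprod ps \<in> carrier G"
  by (induction ps) (use Vs_sub in \<open>auto simp: lprod_def\<close>)

lemma lprod_append: "valid xs \<Longrightarrow> valid ys \<Longrightarrow> lprod (xs @ ys) = lprod xs \<otimes> lprod ys"
proof (induction xs)
  case Nil thus ?case using lprod_carrier by (simp add: lprod_def)
next
  case (Cons p xs)
  have pc: "snd p \<in> carrier G" using Cons.prems Vs_sub by auto
  have "lprod ((p # xs) @ ys) = snd p \<otimes> lprod (xs @ ys)" by (simp add: lprod_def)
  also have "\<dots> = snd p \<otimes> (lprod xs \<otimes> lprod ys)" using Cons by simp
  also have "\<dots> = lprod (p # xs) \<otimes> lprod ys"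
    using pc lprod_carrier Cons.prems by (simp add: lprod_def m_assoc)
  finally show ?case .
qed

lemma lprod_single: "v \<in> carrier G \<Longrightarrow> lprod [(k, v)] = v"
  by (simp add: lprod_def)

lemma wt_append: "wt (xs @ ys) = wt xs + wt ys" by (simp add: wt_def)
lemma wt_nonneg: "0 \<le> wt xs" unfolding wt_def by (induction xs) auto
lemma wt_pos: "xs \<noteq> [] \<Longrightarrow> 0 < wt xs"
proof (cases xs)
  case (Cons x ys)
  have "wt xs = (1/2) ^ fst x + wt ys" using Cons by (simp add: wt_def)
  moreover have "0 < (1/2::real) ^ fst x" by simp
  ultimately show ?thesis using wt_nonneg[of ys] by linarith
qed simp

lemma key:
  "valid ps \<Longrightarrow> wt ps \<le> (1/2) ^ k \<Longrightarrow> lprod ps \<in> Vs k"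
proof (induction "length ps" arbitrary: ps k rule: less_induct)
  case less
  show ?case
  proof (cases "length ps \<le> 1")
    case True
    show ?thesis
    proof (cases ps)
      case Nil thus ?thesis using Vs_one by (simp add: lprod_def)
    next
      case (Cons p xs)
      hence ps: "ps = [p]" using True by simp
      obtain k' v where p: "p = (k', v)" by (cases p)
      have v: "v \<in> Vs k'" using less.prems(1) ps p by simp
      have "(1/2::real) ^ k' \<le> (1/2) ^ k" using less.prems(2) ps p by (simp add: wt_def)
      hence "k \<le> k'" by (simp add: power_decreasing_iff)
      hence "v \<in> Vs k" using Vs_mono v by blast
      moreover have "v \<in> carrier G" using v Vs_sub by blast
      ultimately show ?thesis using ps p by (simp add: lprod_single)
    qed
  next
    case False
    define m where "m = length ps"
    have m2: "2 \<le> m" using False m_def by simp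
    define J where "J = {j. j < m \<and> wt (take j ps) \<le> (1/2) ^ Suc k}"
    have finJ: "finite J" unfolding J_def by simp
    have "0 \<in> J" unfolding J_def using m2 by (simp add: wt_def)
    define j where "j = Max J"
    have jJ: "j \<in> J" unfolding j_def using finJ \<open>0 \<in> J\<close> Max_in by blast
    hence jm: "j < m" and wj: "wt (take j ps) \<le> (1/2) ^ Suc k" unfolding J_def by auto
    have jmax: "\<And>i. i \<in> J \<Longrightarrow> i \<le> j" unfolding j_def using finJ by simp
    define A where "A = take j ps"
    define p where "p = ps ! j"
    define B where "B = drop (Suc j) ps"
    have split: "ps = A @ [p] @ B"
      unfolding A_def p_def B_def using jm m_def by (simp add: id_take_nth_drop)
    have vA: "valid A" and vp: "snd p \<in> Vs (fst p)" and vB: "valid B"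
      using less.prems(1) split by (metis valid_Cons valid_append)+
    have wsum: "wt ps = wt A + (1/2) ^ fst p + wt B"
      using split by (simp add: wt_append wt_def)
    have "A \<noteq> [] \<or> B \<noteq> []"
    proof (rule ccontr)
      assume "\<not> (A \<noteq> [] \<or> B \<noteq> [])"
      hence "ps = [p]" using split by simp
      thus False using m2 m_def by simp
    qed
    hence "0 < wt A + wt B" using wt_pos wt_nonneg by (metis add_pos_nonneg add_nonneg_pos)
    hence "(1/2::real) ^ fst p < (1/2) ^ k" using wsum less.prems(2) by linarith
    hence "k < fst p" by (simp add: power_strict_decreasing_iff)
    hence "Suc k \<le> fst p" by simp
    hence pin: "snd p \<in> Vs (Suc k)" using Vs_mono vp by blast
    have lA: "length A < length ps" unfolding A_def using jm m_def by simp
    have Ain: "lprod A \<in> Vs (Suc k)"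
      using less.hyps[OF lA vA] wj unfolding A_def by simp
    have Bin: "lprod B \<in> Vs (Suc k)"
    proof (cases "Suc j = m")
      case True
      hence "B = []" unfolding B_def m_def by simp
      thus ?thesis using Vs_one by (simp add: lprod_def)
    next
      case False
      hence "Suc j < m" using jm by simp
      hence "Suc j \<notin> J" using jmax by fastforce
      hence "wt (take (Suc j) ps) > (1/2) ^ Suc k" unfolding J_def using \<open>Suc j < m\<close> by auto
      moreover have "take (Suc j) ps = A @ [p]"
        unfolding A_def p_def using jm m_def by (simp add: take_Suc_conv_app_nth)
      ultimately have "wt A + (1/2) ^ fst p > (1/2) ^ Suc k" by (simp add: wt_append wt_def)
      hence "wt B < (1/2) ^ Suc k" using wsum less.prems(2) by simp
      moreover have lB: "length B < length ps" unfolding B_def using jm m_def by simp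
      ultimately show ?thesis using less.hyps[OF lB vB] by simp
    qed
    have "lprod A \<otimes> snd p \<otimes> lprod B \<in> Vs k" using Vs_cube[OF Ain pin Bin] .
    moreover have "lprod ps = lprod A \<otimes> snd p \<otimes> lprod B"
    proof -
      have pc: "snd p \<in> carrier G" using vp Vs_sub by blast
      have "lprod ps = lprod A \<otimes> lprod ([p] @ B)" using split vA vp vB lprod_append by simp
      also have "lprod ([p] @ B) = snd p \<otimes> lprod B" by (simp add: lprod_def)
      finally show ?thesis using pc lprod_carrier vA vB by (simp add: m_assoc)
    qed
    ultimately show ?thesis by simp
  qed
qed

definition Wset where "Wset g = insert 1 {wt ps | ps. valid ps \<and> lprod ps = g}"
definition Nrm where "Nrm g = Inf (Wset g)"

lemma Wset_bdd: "bdd_below (Wset g)"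
  unfolding Wset_def bdd_below_def using wt_nonneg by (intro exI[of _ 0]) auto

lemma Wset_nonneg: "x \<in> Wset g \<Longrightarrow> 0 \<le> x"
  unfolding Wset_def using wt_nonneg by auto

lemma Nrm_le1: "Nrm g \<le> 1"
  unfolding Nrm_def by (rule cInf_lower[OF _ Wset_bdd]) (simp add: Wset_def)

lemma Nrm_nonneg: "0 \<le> Nrm g"
  unfolding Nrm_def by (rule cInf_greatest) (auto simp: Wset_def wt_nonneg)

lemma Nrm_wt: "valid ps \<Longrightarrow> Nrm (lprod ps) \<le> wt ps"
  unfolding Nrm_def by (rule cInf_lower[OF _ Wset_bdd]) (auto simp: Wset_def)

lemma Nrm_lt1: "Nrm g < 1 \<Longrightarrow> g \<in> Vs 0"
proof -
  assume "Nrm g < 1"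
  then obtain x where x: "x \<in> Wset g" "x < 1" unfolding Nrm_def
    using cInf_lessD[of "Wset g" 1] by (auto simp: Wset_def)
  then obtain ps where "valid ps" "lprod ps = g" "wt ps < 1" unfolding Wset_def by auto
  thus "g \<in> Vs 0" using key[of ps 0] by simp
qed

lemma Nrm_Vs: "v \<in> Vs n \<Longrightarrow> Nrm v \<le> (1/2) ^ n"
proof -
  assume v: "v \<in> Vs n"
  have "Nrm (lprod [(n, v)]) \<le> wt [(n, v)]" using v by (intro Nrm_wt) simp
  moreover have "v \<in> carrier G" using v Vs_sub by blast
  ultimately show ?thesis by (simp add: lprod_single wt_def)
qed

lemma Nrm_zero: "(\<And>n. m \<in> Vs n) \<Longrightarrow> Nrm m = 0"
proof -
  assume m: "\<And>n. m \<in> Vs n"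
  have a: "\<And>n. Nrm m \<le> (1/2) ^ n" using Nrm_Vs m by blast
  have "Nrm m \<le> 0"
  proof (rule ccontr)
    assume "\<not> Nrm m \<le> 0"
    hence "0 < Nrm m" by simp
    then obtain n where "(1/2::real) ^ n < Nrm m" using real_arch_pow_inv[of "Nrm m" "1/2"] by auto
    thus False using a[of n] by simp
  qed
  thus ?thesis using Nrm_nonneg by (simp add: antisym)
qed

lemma Nrm_sub:
  assumes g: "g \<in> carrier G" and h: "h \<in> carrier G"
  shows "Nrm (g \<otimes> h) \<le> Nrm g + Nrm h"
proof -
  have main: "Nrm (g \<otimes> h) \<le> r + s" if r: "r \<in> Wset g" and s: "s \<in> Wset h" for r s
  proof (cases "r = 1 \<or> s = 1")
    case True
    have "0 \<le> r" "0 \<le> s" using Wset_nonneg r s by auto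
    thus ?thesis using Nrm_le1[of "g \<otimes> h"] True by auto
  next
    case False
    then obtain ps qs where ps: "valid ps" "lprod ps = g" "r = wt ps" and qs: "valid qs" "lprod qs = h" "s = wt qs"
      using r s unfolding Wset_def by auto
    have "Nrm (lprod (ps @ qs)) \<le> wt (ps @ qs)" using ps qs by (intro Nrm_wt) simp
    thus ?thesis using ps qs by (simp add: lprod_append wt_append)
  qed
  have ne: "\<And>x. Wset x \<noteq> {}" unfolding Wset_def by auto
  have "\<forall>s\<in>Wset h. Nrm (g \<otimes> h) - s \<le> Nrm g"
  proof
    fix s assume s: "s \<in> Wset h"
    have "Nrm (g \<otimes> h) - s \<le> Inf (Wset g)"
      by (rule cInf_greatest[OF ne]) (use main s in force)
    thus "Nrm (g \<otimes> h) - s \<le> Nrm g" unfolding Nrm_def .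
  qed
  hence "Nrm (g \<otimes> h) - Nrm g \<le> Inf (Wset h)"
    by (intro cInf_greatest[OF ne]) force
  thus ?thesis unfolding Nrm_def by simp
qed

end


context vfam begin

definition sroot where
  "sroot V = (SOME W. W\<in>VV \<and> (\<forall>a\<in>W. inv a \<in> W) \<and> (\<forall>a\<in>W. \<forall>b\<in>W. \<forall>c\<in>W. a \<otimes> b \<otimes> c \<in> V) \<and> W \<subseteq> V)"
definition chn where "chn V n = (sroot ^^ n) V"

lemma sroot_props:
  assumes "V \<in> VV"
  shows "sroot V \<in> VV \<and> (\<forall>a\<in>sroot V. inv a \<in> sroot V) \<and>
     (\<forall>a\<in>sroot V. \<forall>b\<in>sroot V. \<forall>c\<in>sroot V. a \<otimes> b \<otimes> c \<in> V) \<and> sroot V \<subseteq> V"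
proof -
  have "\<exists>W. W\<in>VV \<and> (\<forall>a\<in>W. inv a \<in> W) \<and> (\<forall>a\<in>W. \<forall>b\<in>W. \<forall>c\<in>W. a \<otimes> b \<otimes> c \<in> V) \<and> W \<subseteq> V"
    using V_sym_root[OF assms] by blast
  from someI_ex[OF this] show ?thesis unfolding sroot_def .
qed

lemma chn_VV: "V \<in> VV \<Longrightarrow> chn V n \<in> VV"
  by (induction n) (auto simp: chn_def sroot_props)

lemma chn_Suc: "chn V (Suc n) = sroot (chn V n)" by (simp add: chn_def)

lemma chn_pchain: "V \<in> VV \<Longrightarrow> pchain G (chn V)"
proof (unfold_locales)
  fix n assume V: "V \<in> VV"
  show "chn V n \<subseteq> carrier G" using V_sub chn_VV V by blast
  show "\<one> \<in> chn V n" using V_one chn_VV V by blast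
next
  fix a b c n assume V: "V \<in> VV" and abc: "a \<in> chn V (Suc n)" "b \<in> chn V (Suc n)" "c \<in> chn V (Suc n)"
  thus "a \<otimes> b \<otimes> c \<in> chn V n" using sroot_props[OF chn_VV[OF V, of n]] by (simp add: chn_Suc)
next
  fix a n assume V: "V \<in> VV" and a: "a \<in> chn V (Suc n)"
  thus "inv a \<in> chn V (Suc n)" using sroot_props[OF chn_VV[OF V, of n]] by (simp add: chn_Suc)
qed

definition rep where "rep D = (SOME g. g \<in> carrier G \<and> D = phi g)"

lemma rep: "D \<in> carrier HH \<Longrightarrow> rep D \<in> carrier G \<and> D = phi (rep D)"
  unfolding rep_def using someI_ex[of "\<lambda>g. g \<in> carrier G \<and> D = phi g"] HH_elem by blast

lemma creg_TH: "completely_regular_space TH"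
  unfolding completely_regular_space_def
proof (intro allI impI, elim conjE)
  fix Z C assume Z: "closedin TH Z" and C: "C \<in> topspace TH - Z"
  obtain h0 where h0: "h0 \<in> carrier G" "C = phi h0" using C topspace_TH HH_elem by auto
  define U where "U = topspace TH - Z"
  have U: "openin TH U" unfolding U_def using Z closedin_def by blast
  obtain V where V: "V \<in> VV" "\<forall>v\<in>V. phi (h0 \<otimes> v) \<in> U"
    using TH_nb[OF U h0(1)] C h0 U_def by auto
  interpret P: pchain G "chn V" using chn_pchain[OF V(1)] .
  define F where "F x = P.Nrm (inv h0 \<otimes> x)" for x
  define f where "f D = F (rep D)" for D
  have MMin: "\<And>mm n. mm \<in> MM \<Longrightarrow> mm \<in> chn V n" using MM_sub_V chn_VV V(1) by blast
  have est: "\<bar>F (x \<otimes> v \<otimes> mm) - F x\<bar> \<le> (1/2) ^ Suc n"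
    if x: "x \<in> carrier G" and v: "v \<in> chn V (Suc n)" and mm: "mm \<in> MM" for x v mm n
  proof -
    define y where "y = inv h0 \<otimes> x"
    have yc: "y \<in> carrier G" unfolding y_def using x h0 by simp
    have vc: "v \<in> carrier G" using v P.Vs_sub by blast
    have mc: "mm \<in> carrier G" using mm MM_carrier by blast
    have n0: "P.Nrm mm = 0" by (rule P.Nrm_zero) (rule MMin[OF mm])
    have imm: "inv mm \<in> MM" using subgroup.m_inv_closed[OF MM_sg mm] .
    have n0': "P.Nrm (inv mm) = 0" by (rule P.Nrm_zero) (rule MMin[OF imm])
    have nv: "P.Nrm v \<le> (1/2) ^ Suc n" using P.Nrm_Vs[OF v] .
    have nv': "P.Nrm (inv v) \<le> (1/2) ^ Suc n" using P.Nrm_Vs[OF P.Vs_sym[OF v]] .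
    have e1: "inv h0 \<otimes> (x \<otimes> v \<otimes> mm) = y \<otimes> v \<otimes> mm" unfolding y_def using x h0 vc mc by (simp add: m_assoc)
    have a1: "P.Nrm (y \<otimes> v \<otimes> mm) \<le> P.Nrm y + (1/2) ^ Suc n"
      using P.Nrm_sub[of "y \<otimes> v" mm] P.Nrm_sub[of y v] yc vc mc n0 nv by simp
    have e2: "y = (y \<otimes> v \<otimes> mm) \<otimes> (inv mm \<otimes> inv v)" using yc vc mc by (simp add: m_assoc cancel1)
    have "P.Nrm y \<le> P.Nrm (y \<otimes> v \<otimes> mm) + P.Nrm (inv mm \<otimes> inv v)"
      using P.Nrm_sub[of "y \<otimes> v \<otimes> mm" "inv mm \<otimes> inv v"] yc vc mc e2 by simp
    moreover have "P.Nrm (inv mm \<otimes> inv v) \<le> (1/2) ^ Suc n"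
      using P.Nrm_sub[of "inv mm" "inv v"] vc mc n0' nv' by simp
    ultimately have a2: "P.Nrm y \<le> P.Nrm (y \<otimes> v \<otimes> mm) + (1/2) ^ Suc n" by simp
    show ?thesis unfolding F_def e1 using a1 a2 unfolding y_def by (simp only: abs_le_iff) linarith
  qed
  have fcont: "continuous_map TH euclideanreal f"
  proof (rule cont_pt)
    fix D U' assume D: "D \<in> topspace TH" and U': "openin euclideanreal U'" and fD: "f D \<in> U'"
    have "open U'" using U' by simp
    then obtain e where e: "e > 0" "ball (f D) e \<subseteq> U'"
      using open_contains_ball_eq fD by blast
    obtain n where n: "(1/2::real) ^ n < e" using real_arch_pow_inv[OF e(1), of "1/2"] by auto
    have "(1/2::real) ^ Suc n \<le> (1/2) ^ n" by (rule power_decreasing) simp_all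
    hence n': "(1/2::real) ^ Suc n < e" using n by linarith
    define g where "g = rep D"
    have Dc0: "D \<in> carrier HH" using D topspace_TH by simp
    have g: "g \<in> carrier G" "D = phi g" using rep[OF Dc0] unfolding g_def by blast+
    have Vn: "chn V (Suc n) \<in> VV" using chn_VV V(1) by blast
    define W where "W = phi ` Intr (lc g (chn V (Suc n)))"
    have "openin TH W" "D \<in> W" unfolding W_def using open_nb[OF g(1) Vn] g by auto
    moreover have "\<forall>D'\<in>W. f D' \<in> U'"
    proof
      fix D' assume "D' \<in> W"
      then obtain v where v: "v \<in> chn V (Suc n)" "D' = phi (g \<otimes> v)" unfolding W_def using nb_elem by blast
      have vc: "v \<in> carrier G" using v P.Vs_sub by blast
      define d where "d = rep D'"
      have D'c: "D' \<in> carrier HH" using v g vc phi_in by simp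
      have d: "d \<in> carrier G" "D' = phi d" using rep[OF D'c] unfolding d_def by blast+
      define mm where "mm = inv (g \<otimes> v) \<otimes> d"
      have mm: "mm \<in> MM" unfolding mm_def using phi_eqD[of "g \<otimes> v" d] g vc d v by simp
      have "d = g \<otimes> v \<otimes> mm" unfolding mm_def using g vc d by (simp add: cancel1)
      hence "\<bar>F d - F g\<bar> \<le> (1/2) ^ Suc n" using est[OF g(1) v(1) mm] by simp
      hence "\<bar>F d - F g\<bar> < e" using n' by linarith
      hence "dist (f D) (f D') < e" unfolding f_def d_def[symmetric] g_def[symmetric] dist_real_def
        by (simp add: abs_minus_commute)
      thus "f D' \<in> U'" using e by auto
    qed
    ultimately show "\<exists>W. openin TH W \<and> D \<in> W \<and> (\<forall>y\<in>W. f y \<in> U')" by blast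
  qed simp
  have frange: "f ` topspace TH \<subseteq> {0..1}" unfolding f_def F_def using P.Nrm_nonneg P.Nrm_le1 by auto
  have "continuous_map TH (top_of_set {0..1}) f"
    using fcont frange by (auto simp: continuous_map_in_subtopology)
  moreover have "f C = 0"
  proof -
    have Cc: "C \<in> carrier HH" using C topspace_TH by auto
    define d where "d = rep C"
    have d: "d \<in> carrier G" "C = phi d" using rep[OF Cc] unfolding d_def by blast+
    have "inv h0 \<otimes> d \<in> MM" using phi_eqD[OF h0(1) d(1)] h0 d by simp
    hence "P.Nrm (inv h0 \<otimes> d) = 0" by (intro P.Nrm_zero MMin)
    thus ?thesis unfolding f_def F_def d_def .
  qed
  moreover have "f ` Z \<subseteq> {1}"
  proof
    fix y assume "y \<in> f ` Z"
    then obtain D where D: "D \<in> Z" "y = f D" by blast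
    have Dc: "D \<in> carrier HH" using D Z closedin_subset topspace_TH by blast
    define d where "d = rep D"
    have d: "d \<in> carrier G" "D = phi d" using rep[OF Dc] unfolding d_def by blast+
    have "\<not> P.Nrm (inv h0 \<otimes> d) < 1"
    proof
      assume "P.Nrm (inv h0 \<otimes> d) < 1"
      hence "inv h0 \<otimes> d \<in> V" using P.Nrm_lt1 by (simp add: chn_def)
      hence "phi (h0 \<otimes> (inv h0 \<otimes> d)) \<in> U" using V by blast
      hence "D \<in> U" using d h0 by (simp add: cancel1)
      thus False using D U_def by blast
    qed
    hence "P.Nrm (inv h0 \<otimes> d) = 1" using P.Nrm_le1 by (simp add: not_less antisym)
    thus "y \<in> {1}" using D unfolding f_def F_def d_def by simp
  qed
  ultimately have cc: "continuous_map TH (top_of_set {0..1}) f \<and> f C = 0 \<and> f ` Z \<subseteq> {1}"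
    by blast
  show "\<exists>f::'g set \<Rightarrow> real. continuous_map TH (top_of_set {0..1}) f \<and> f C = 0 \<and> f ` Z \<subseteq> {1}"
    by (rule exI[of _ f]) (rule cc)
qed

lemma tych_TH: "tychonoff_space TH"
  unfolding tychonoff_space_def using t1_TH creg_TH by blast

lemma topgrp_HH: "topological_group HH TH"
  unfolding topological_group_def using HH_group topspace_TH mult_cont inv_cont by blast

end


locale vact = vfam G TG VV for G (structure) and TG and VV +
  fixes X :: "'x topology" and \<alpha>
  assumes GS: "G_space G TG X \<alpha>"
    and trans: "transitive_action G X \<alpha>"
    and kern: "m \<in> MM \<Longrightarrow> y \<in> topspace X \<Longrightarrow> \<alpha> m y = y"
    and cond: "g0 \<in> carrier G \<Longrightarrow> y0 \<in> topspace X \<Longrightarrow> openin X Op \<Longrightarrow> \<alpha> g0 y0 \<in> Op \<Longrightarrow>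
       \<exists>V\<in>VV. \<exists>O3. openin X O3 \<and> y0 \<in> O3 \<and> (\<forall>v\<in>V. \<forall>y\<in>O3. \<alpha> (g0 \<otimes> v) y \<in> Op)"
begin

lemma acont: "continuous_map (prod_topology TG X) X (\<lambda>(g, x). \<alpha> g x)"
  using GS unfolding G_space_def by blast

lemma a_in: "g \<in> carrier G \<Longrightarrow> y \<in> topspace X \<Longrightarrow> \<alpha> g y \<in> topspace X"
proof -
  assume "g \<in> carrier G" "y \<in> topspace X"
  hence "(g, y) \<in> topspace (prod_topology TG X)" using topsp by simp
  thus ?thesis using continuous_map_image_subset_topspace[OF acont] by force
qed

lemma a_one: "y \<in> topspace X \<Longrightarrow> \<alpha> \<one> y = y"
  using GS unfolding G_space_def by blast

lemma a_mult: "g \<in> carrier G \<Longrightarrow> h \<in> carrier G \<Longrightarrow> y \<in> topspace X \<Longrightarrow> \<alpha> (g \<otimes> h) y = \<alpha> g (\<alpha> h y)"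
  using GS unfolding G_space_def by blast

lemma a_same:
  assumes a: "a \<in> carrier G" and b: "b \<in> carrier G" and e: "phi a = phi b" and y: "y \<in> topspace X"
  shows "\<alpha> a y = \<alpha> b y"
proof -
  have m: "inv a \<otimes> b \<in> MM" using phi_eqD[OF a b e] .
  have "\<alpha> b y = \<alpha> (a \<otimes> (inv a \<otimes> b)) y" using a b by (simp add: cancel1)
  also have "\<dots> = \<alpha> a (\<alpha> (inv a \<otimes> b) y)" using a b y by (simp add: a_mult)
  also have "\<dots> = \<alpha> a y" using kern[OF m y] by simp
  finally show ?thesis by simp
qed

definition gam where "gam C y = \<alpha> (rep C) y"

lemma gam_phi: "a \<in> carrier G \<Longrightarrow> y \<in> topspace X \<Longrightarrow> gam (phi a) y = \<alpha> a y"
proof -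
  assume a: "a \<in> carrier G" and y: "y \<in> topspace X"
  have r: "rep (phi a) \<in> carrier G" "phi a = phi (rep (phi a))" using rep[OF phi_in[OF a]] by blast+
  show ?thesis unfolding gam_def using a_same[OF r(1) a _ y] r(2) by simp
qed

lemma gam_in: "C \<in> carrier HH \<Longrightarrow> y \<in> topspace X \<Longrightarrow> gam C y \<in> topspace X"
  unfolding gam_def using rep a_in by blast

lemma gam_cont: "continuous_map (prod_topology TH X) X (\<lambda>(C, y). gam C y)"
proof (rule cont_pt)
  fix p assume "p \<in> topspace (prod_topology TH X)"
  thus "(\<lambda>(C, y). gam C y) p \<in> topspace X" using gam_in topspace_TH by auto
next
  fix p U assume p: "p \<in> topspace (prod_topology TH X)" and U: "openin X U"
    and pU: "(\<lambda>(C, y). gam C y) p \<in> U"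
  obtain C y0 where pc: "p = (C, y0)" by (cases p)
  have C: "C \<in> carrier HH" and y0: "y0 \<in> topspace X" using p pc topspace_TH by auto
  define g0 where "g0 = rep C"
  have g0: "g0 \<in> carrier G" "C = phi g0" using rep[OF C] unfolding g0_def by blast+
  have "\<alpha> g0 y0 \<in> U" using pU pc unfolding gam_def g0_def by simp
  then obtain V O3 where V: "V \<in> VV" "openin X O3" "y0 \<in> O3" "\<forall>v\<in>V. \<forall>y\<in>O3. \<alpha> (g0 \<otimes> v) y \<in> U"
    using cond[OF g0(1) y0 U] by blast
  define W1 where "W1 = phi ` Intr (lc g0 V)"
  have o1: "openin TH W1" "C \<in> W1" unfolding W1_def using open_nb[OF g0(1) V(1)] g0(2) by auto
  have "openin (prod_topology TH X) (W1 \<times> O3)"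
    using o1(1) V(2) by (rule openin_prod_Times_iff[THEN iffD2, OF disjI2, OF disjI2, OF conjI])
  moreover have "p \<in> W1 \<times> O3" using pc o1(2) V(3) by blast
  moreover have "\<forall>q\<in>W1 \<times> O3. (\<lambda>(C, y). gam C y) q \<in> U"
  proof
    fix q assume "q \<in> W1 \<times> O3"
    then obtain D y where q: "q = (D, y)" "D \<in> W1" "y \<in> O3" by blast
    obtain v where v: "v \<in> V" "D = phi (g0 \<otimes> v)" using nb_elem q(2) unfolding W1_def by blast
    have vc: "v \<in> carrier G" using V_mem V(1) v(1) by blast
    have yX: "y \<in> topspace X" using q(3) openin_subset[OF V(2)] by blast
    have "gam D y = \<alpha> (g0 \<otimes> v) y" using v(2) gam_phi g0(1) vc yX by simp
    thus "(\<lambda>(C, y). gam C y) q \<in> U" using V(4) v(1) q by simp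
  qed
  ultimately show "\<exists>W. openin (prod_topology TH X) W \<and> p \<in> W \<and> (\<forall>y\<in>W. (\<lambda>(C, y). gam C y) y \<in> U)"
    by blast
qed

lemma GS_HH: "G_space HH TH X gam"
  unfolding G_space_def
proof (intro conjI ballI)
  show "topological_group HH TH" by (rule topgrp_HH)
  show "tychonoff_space TH" by (rule tych_TH)
  show "tychonoff_space X" using GS unfolding G_space_def by blast
  show "continuous_map (prod_topology TH X) X (\<lambda>(g, x). gam g x)" using gam_cont .
next
  fix x assume x: "x \<in> topspace X"
  show "gam \<one>\<^bsub>HH\<^esub> x = x" using gam_phi[OF one_closed x] phi_one a_one[OF x] by simp
next
  fix C D x assume C: "C \<in> carrier HH" and D: "D \<in> carrier HH" and x: "x \<in> topspace X"
  obtain a where a: "a \<in> carrier G" "C = phi a" using HH_elem[OF C] by blast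
  obtain b where b: "b \<in> carrier G" "D = phi b" using HH_elem[OF D] by blast
  have "C \<otimes>\<^bsub>HH\<^esub> D = phi (a \<otimes> b)" using a b by (simp only:) (rule phi_mult)
  hence "gam (C \<otimes>\<^bsub>HH\<^esub> D) x = \<alpha> (a \<otimes> b) x" using gam_phi a b x by simp
  also have "\<dots> = \<alpha> a (\<alpha> b x)" using a_mult a b x by simp
  also have "\<dots> = gam C (gam D x)" using gam_phi a b x a_in by simp
  finally show "gam (C \<otimes>\<^bsub>HH\<^esub> D) x = gam C (gam D x)" .
qed

lemma trans_HH: "transitive_action HH X gam"
  unfolding transitive_action_def
proof (intro ballI equalityI subsetI)
  fix x y assume x: "x \<in> topspace X" and "y \<in> (\<lambda>g. gam g x) ` carrier HH"
  thus "y \<in> topspace X" using gam_in by blast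
next
  fix x y assume x: "x \<in> topspace X" and y: "y \<in> topspace X"
  have "y \<in> (\<lambda>g. \<alpha> g x) ` carrier G" using trans x y unfolding transitive_action_def by blast
  then obtain g where g: "g \<in> carrier G" "y = \<alpha> g x" by blast
  thus "y \<in> (\<lambda>g. gam g x) ` carrier HH" using gam_phi[OF g(1) x] phi_in[OF g(1)] by force
qed

lemma equiv_HH: "equivariant_pair G TG HH TH X \<alpha> gam phi"
  unfolding equivariant_pair_def using phi_hom phi_cont gam_phi by simp

lemma onto_HH: "phi ` carrier G = carrier HH" using carrier_HH by simp

end


unbundle cardinal_syntax

context vfam begin

lemma set_mult_mem: "x \<in> A <#>\<^bsub>K\<^esub> B \<longleftrightarrow> (\<exists>a\<in>A. \<exists>b\<in>B. x = a \<otimes>\<^bsub>K\<^esub> b)"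
  unfolding set_mult_def by blast

lemma pre_unit:
  assumes U: "unit_nbhd HH TH U"
  shows "unit_nbhd G TG (pre U)"
proof -
  obtain W where W: "openin TH W" "\<one>\<^bsub>HH\<^esub> \<in> W" "W \<subseteq> U" using U unfolding unit_nbhd_def by blast
  have "opn (pre W)" using W(1) unfolding openin_TH by blast
  hence "openin TG (pre W)" by (rule opn_TG)
  moreover have "\<one> \<in> pre W" using W(2) phi_one unfolding pre_def by simp
  moreover have "pre W \<subseteq> pre U" using W(3) unfolding pre_def by blast
  moreover have "pre U \<subseteq> topspace TG" unfolding pre_def topsp by blast
  ultimately show ?thesis unfolding unit_nbhd_def by blast
qed

lemma ib_HH:
  assumes ib: "ib_le G TG K"
  shows "ib_le HH TH K"
  unfolding ib_le_def
proof (intro conjI allI impI)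
  show "infinite K" using ib unfolding ib_le_def by blast
next
  fix U assume U: "unit_nbhd HH TH U"
  have Uc: "U \<subseteq> carrier HH" using U topspace_TH unfolding unit_nbhd_def by blast
  obtain A where A: "A \<subseteq> carrier G" "card_le A K" "A <#> pre U = carrier G"
    using ib pre_unit[OF U] unfolding ib_le_def by blast
  have "phi ` A \<subseteq> carrier HH" using A(1) phi_in by blast
  moreover have "card_le (phi ` A) K"
    using ordLeq_transitive[OF card_of_image[of phi A] A(2)[unfolded card_le_def]] unfolding card_le_def .
  moreover have "phi ` A <#>\<^bsub>HH\<^esub> U = carrier HH"
  proof (intro equalityI subsetI)
    fix E assume "E \<in> phi ` A <#>\<^bsub>HH\<^esub> U"
    then obtain a D where "a \<in> A" "D \<in> U" "E = phi a \<otimes>\<^bsub>HH\<^esub> D" unfolding set_mult_mem by blast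
    thus "E \<in> carrier HH" using A(1) Uc phi_in group.is_monoid[OF HH_group]
      by (meson monoid.m_closed subsetD)
  next
    fix E assume "E \<in> carrier HH"
    then obtain g where g: "g \<in> carrier G" "E = phi g" using HH_elem by blast
    have "g \<in> A <#> pre U" using A(3) g(1) by simp
    then obtain a u where au: "a \<in> A" "u \<in> pre U" "g = a \<otimes> u" unfolding set_mult_def by blast
    have ac: "a \<in> carrier G" using au(1) A(1) by blast
    have uc: "u \<in> carrier G" and uU: "phi u \<in> U" using au(2) unfolding pre_def by blast+
    have "E = phi a \<otimes>\<^bsub>HH\<^esub> phi u" using g(2) au(3) phi_mult[OF ac uc] by simp
    moreover have "phi a \<in> phi ` A" using au(1) by blast
    ultimately show "E \<in> phi ` A <#>\<^bsub>HH\<^esub> U" using uU unfolding set_mult_def by blast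
  qed
  ultimately have c: "phi ` A \<subseteq> carrier HH \<and> card_le (phi ` A) K \<and> phi ` A <#>\<^bsub>HH\<^esub> U = carrier HH" by blast
  show "\<exists>A. A \<subseteq> carrier HH \<and> card_le A K \<and> A <#>\<^bsub>HH\<^esub> U = carrier HH"
    by (rule exI[of _ "phi ` A"]) (rule c)
qed

lemma char_HH:
  assumes VC: "card_le VV Cd" and inf: "infinite Cd"
  shows "character_le TH Cd"
  unfolding character_le_def
proof (intro conjI ballI inf)
  fix C0 assume C0: "C0 \<in> topspace TH"
  define g where "g = rep C0"
  have C0c: "C0 \<in> carrier HH" using C0 topspace_TH by simp
  have g: "g \<in> carrier G" "C0 = phi g" using rep[OF C0c] unfolding g_def by blast+
  define B where "B = (\<lambda>V. phi ` Intr (lc g V)) ` VV"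
  have "local_base_at TH C0 B"
    unfolding local_base_at_def
  proof (intro conjI ballI allI impI)
    fix Bx assume "Bx \<in> B"
    then obtain V where V: "V \<in> VV" "Bx = phi ` Intr (lc g V)" unfolding B_def by blast
    have "openin TH (phi ` Intr (lc g V)) \<and> phi g \<in> phi ` Intr (lc g V)" using open_nb[OF g(1) V(1)] .
    thus "openin TH Bx" "C0 \<in> Bx" using V(2) g(2) by simp_all
  next
    fix U assume U: "openin TH U \<and> C0 \<in> U"
    obtain V where V: "V \<in> VV" "\<forall>v\<in>V. phi (g \<otimes> v) \<in> U"
      using TH_nb[OF conjunct1[OF U] g(1)] conjunct2[OF U] g(2) by blast
    have sub: "phi ` Intr (lc g V) \<subseteq> U"
    proof
      fix D assume "D \<in> phi ` Intr (lc g V)"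
      then obtain v where "v \<in> V" "D = phi (g \<otimes> v)" using nb_elem by blast
      thus "D \<in> U" using V(2) by simp
    qed
    have "phi ` Intr (lc g V) \<in> B" unfolding B_def using V(1) by (rule imageI)
    thus "\<exists>Bx\<in>B. Bx \<subseteq> U" using sub by blast
  qed
  moreover have "card_le B Cd"
    using ordLeq_transitive[OF card_of_image VC[unfolded card_le_def]] unfolding card_le_def B_def .
  ultimately have c: "local_base_at TH C0 B \<and> card_le B Cd" by blast
  show "\<exists>B. local_base_at TH C0 B \<and> card_le B Cd" by (rule exI[of _ B]) (rule c)
qed

definition sqr where
  "sqr V = (SOME W. W\<in>VV \<and> (\<forall>a\<in>W. inv a \<in> W) \<and> (\<forall>a\<in>W. \<forall>b\<in>W. a \<otimes> b \<in> V) \<and> W \<subseteq> V)"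

lemma sqr_props:
  assumes "V \<in> VV"
  shows "sqr V \<in> VV \<and> (\<forall>a\<in>sqr V. inv a \<in> sqr V) \<and> (\<forall>a\<in>sqr V. \<forall>b\<in>sqr V. a \<otimes> b \<in> V) \<and> sqr V \<subseteq> V"
proof -
  have "\<exists>W. W\<in>VV \<and> (\<forall>a\<in>W. inv a \<in> W) \<and> (\<forall>a\<in>W. \<forall>b\<in>W. a \<otimes> b \<in> V) \<and> W \<subseteq> V"
    using V_sq[OF assms] by blast
  from someI_ex[OF this] show ?thesis unfolding sqr_def .
qed

lemma weight_HH:
  assumes VC: "card_le VV Cd" and inf: "infinite Cd" and ib: "ib_le G TG L" and LC: "card_le L Cd"
  shows "weight_le TH Cd"
proof -
  have unitW: "unit_nbhd G TG W" if "W \<in> VV" for W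
    unfolding unit_nbhd_def using that V_open V_one V_sub topsp by blast
  define Af where "Af V = (SOME A. A \<subseteq> carrier G \<and> card_le A L \<and> A <#> sqr V = carrier G)" for V
  have Af: "Af V \<subseteq> carrier G \<and> card_le (Af V) L \<and> Af V <#> sqr V = carrier G" if V: "V \<in> VV" for V
  proof -
    have "\<exists>A. A \<subseteq> carrier G \<and> card_le A L \<and> A <#> sqr V = carrier G"
      using ib unitW[OF conjunct1[OF sqr_props[OF V]]] unfolding ib_le_def by blast
    from someI_ex[OF this] show ?thesis unfolding Af_def .
  qed
  define B where "B = (\<Union>V\<in>VV. (\<lambda>a. phi ` Intr (lc a V)) ` Af V)"
  have Bopen: "\<forall>Bx\<in>B. openin TH Bx"
  proof
    fix Bx assume "Bx \<in> B"
    then obtain V a where "V \<in> VV" "a \<in> Af V" "Bx = phi ` Intr (lc a V)" unfolding B_def by blast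
    thus "openin TH Bx" using open_img[OF Intr_opn] by blast
  qed
  have Bcov: "\<exists>Cs\<subseteq>B. \<Union>Cs = U" if U: "openin TH U" for U
  proof (intro exI[of _ "{Bx\<in>B. Bx \<subseteq> U}"] conjI)
    show "{Bx\<in>B. Bx \<subseteq> U} \<subseteq> B" by blast
    show "\<Union>{Bx\<in>B. Bx \<subseteq> U} = U"
    proof (intro equalityI subsetI)
      fix E assume "E \<in> \<Union>{Bx\<in>B. Bx \<subseteq> U}" thus "E \<in> U" by blast
    next
      fix E assume E: "E \<in> U"
      have "E \<in> carrier HH" using E U openin_subset topspace_TH by blast
      then obtain h where h: "h \<in> carrier G" "E = phi h" using HH_elem by blast
      obtain V0 where V0: "V0 \<in> VV" "\<forall>v\<in>V0. phi (h \<otimes> v) \<in> U" using TH_nb[OF U h(1)] E h by blast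
      define V1 where "V1 = sqr V0"
      have V1: "V1 \<in> VV" "\<forall>a\<in>V1. \<forall>b\<in>V1. a \<otimes> b \<in> V0" using sqr_props[OF V0(1)] unfolding V1_def by blast+
      define W where "W = sqr V1"
      have W: "W \<in> VV" "\<forall>a\<in>W. inv a \<in> W" "\<forall>a\<in>W. \<forall>b\<in>W. a \<otimes> b \<in> V1" "W \<subseteq> V1"
        using sqr_props[OF V1(1)] unfolding W_def by blast+
      have "h \<in> Af V1 <#> W" using Af[OF V1(1)] h(1) unfolding W_def by blast
      then obtain a w where aw: "a \<in> Af V1" "w \<in> W" "h = a \<otimes> w" unfolding set_mult_def by blast
      have ac: "a \<in> carrier G" using Af[OF V1(1)] aw(1) by blast
      have wc: "w \<in> carrier G" using V_mem W(1) aw(2) by blast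
      define Bx where "Bx = phi ` Intr (lc a V1)"
      have "Bx \<in> B" unfolding B_def Bx_def using V1(1) aw(1) by blast
      moreover have "h \<in> Intr (lc a V1)"
        unfolding Intr_def
      proof (intro CollectI conjI bexI[OF _ W(1)] ballI)
        show "h \<in> carrier G" by (rule h(1))
        fix u assume u: "u \<in> W"
        have uc: "u \<in> carrier G" using V_mem W(1) u by blast
        have "w \<otimes> u \<in> V1" using W(3) aw(2) u by blast
        moreover have "h \<otimes> u = a \<otimes> (w \<otimes> u)" using aw(3) ac wc uc by (simp add: m_assoc)
        ultimately show "h \<otimes> u \<in> lc a V1" unfolding lc_def by blast
      qed
      hence "E \<in> Bx" unfolding Bx_def using h(2) by blast
      moreover have "Bx \<subseteq> U"
      proof
        fix D assume "D \<in> Bx"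
        then obtain v where v: "v \<in> V1" "D = phi (a \<otimes> v)" unfolding Bx_def using nb_elem by blast
        have vc: "v \<in> carrier G" using V_mem V1(1) v(1) by blast
        have "inv w \<in> V1" using W(2,4) aw(2) by blast
        hence "inv w \<otimes> v \<in> V0" using V1(2) v(1) by blast
        hence "phi (h \<otimes> (inv w \<otimes> v)) \<in> U" using V0(2) by blast
        moreover have "h \<otimes> (inv w \<otimes> v) = a \<otimes> v" using aw(3) ac wc vc by (simp add: m_assoc cancel1)
        ultimately show "D \<in> U" using v(2) by simp
      qed
      ultimately show "E \<in> \<Union>{Bx\<in>B. Bx \<subseteq> U}" by blast
    qed
  qed
  have "card_le B Cd" unfolding card_le_def B_def
  proof (rule card_of_UNION_ordLeq_infinite[OF inf])
    show "|VV| \<le>o |Cd|" using VC unfolding card_le_def by simp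
    show "\<forall>V\<in>VV. |(\<lambda>a. phi ` Intr (lc a V)) ` Af V| \<le>o |Cd|"
    proof
      fix V assume V: "V \<in> VV"
      have "|Af V| \<le>o |Cd|" using ordLeq_transitive[OF conjunct1[OF conjunct2[OF Af[OF V]], unfolded card_le_def] LC[unfolded card_le_def]] .
      thus "|(\<lambda>a. phi ` Intr (lc a V)) ` Af V| \<le>o |Cd|" using ordLeq_transitive[OF card_of_image] by blast
    qed
  qed
  hence c: "(\<forall>Bx\<in>B. openin TH Bx) \<and> (\<forall>U. openin TH U \<longrightarrow> (\<exists>Cs\<subseteq>B. \<Union>Cs = U)) \<and> card_le B Cd"
    using Bopen Bcov by blast
  show ?thesis unfolding weight_le_def
  proof (rule conjI[OF inf])
    show "\<exists>B. (\<forall>Bx\<in>B. openin TH Bx) \<and> (\<forall>U. openin TH U \<longrightarrow> (\<exists>Cs\<subseteq>B. \<Union>Cs = U)) \<and> card_le B Cd"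
      by (rule exI[of _ B]) (rule c)
  qed
qed

end


unbundle cardinal_syntax

lemma ex_min_card:
  assumes "S \<noteq> {}"
  shows "\<exists>F\<in>S. \<forall>F'\<in>S. |F| \<le>o |F'|"
proof -
  obtain F0 where F0: "F0 \<in> S" using assms by blast
  have "|F0| \<in> card_of ` S" using F0 by blast
  then obtain r where r: "r \<in> card_of ` S" "\<And>y. (y, r) \<in> ordLess \<Longrightarrow> y \<notin> card_of ` S"
    using wfE_min[OF wf_ordLess] by metis
  then obtain F where F: "F \<in> S" "r = |F|" by blast
  have "\<forall>F'\<in>S. |F| \<le>o |F'|"
  proof
    fix F' assume F': "F' \<in> S"
    have "|F'| <o |F| \<or> |F| \<le>o |F'|" using ordLess_or_ordLeq[OF card_of_Well_order card_of_Well_order] .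
    moreover have "\<not> |F'| <o |F|" using r(2)[of "|F'|"] F' F(2) by blast
    ultimately show "|F| \<le>o |F'|" by blast
  qed
  thus ?thesis using F(1) by blast
qed

lemma cUn: "\<not> finite C \<Longrightarrow> |A| \<le>o |C| \<Longrightarrow> |B| \<le>o |C| \<Longrightarrow> |A \<union> B| \<le>o |C|"
  by (rule card_of_Un_ordLeq_infinite_Field) (simp_all add: Field_card_of card_of_Card_order card_of_card_order_on)

lemma cTimes: "\<not> finite C \<Longrightarrow> |A| \<le>o |C| \<Longrightarrow> |B| \<le>o |C| \<Longrightarrow> |A \<times> B| \<le>o |C|"
  by (rule card_of_Times_ordLeq_infinite_Field) (simp_all add: Field_card_of card_of_Card_order card_of_card_order_on)

lemma cImg: "|A| \<le>o |C| \<Longrightarrow> |f ` A| \<le>o |C|"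
  using ordLeq_transitive[OF card_of_image] by blast

lemma cIns: "\<not> finite C \<Longrightarrow> |A| \<le>o |C| \<Longrightarrow> |insert a A| \<le>o |C|"
proof -
  assume C: "\<not> finite C" and A: "|A| \<le>o |C|"
  have "C \<noteq> {}" using C by auto
  hence "|{a}| \<le>o |C|" by (rule card_of_singl_ordLeq)
  hence "|{a} \<union> A| \<le>o |C|" using cUn[OF C _ A] by blast
  thus ?thesis by simp
qed

context tgrp begin

lemma ib_inv:
  assumes ib: "ib_le G TG L"
  shows "inv_le G TG L"
  unfolding inv_le_def
proof (intro conjI allI impI)
  show "infinite L" using ib unfolding ib_le_def by blast
next
  fix U assume U: "unit_nbhd G TG U"
  obtain U0 where U0: "openin TG U0" "\<one> \<in> U0" "U0 \<subseteq> U" using U unfolding unit_nbhd_def by blast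
  obtain W0 where W0: "openin TG W0" "\<one> \<in> W0" "\<forall>a\<in>W0. \<forall>b\<in>W0. \<forall>c\<in>W0. a \<otimes> b \<otimes> c \<in> U0"
    using cube_root[OF U0(1,2)] by blast
  define W where "W = W0 \<inter> (\<lambda>v. inv v) ` W0"
  have W0c: "W0 \<subseteq> carrier G" using openin_subset[OF W0(1)] topsp by auto
  have Wo: "openin TG W" unfolding W_def using W0(1) open_invimg[OF W0(1)] by (rule openin_Int)
  have W1: "\<one> \<in> W" unfolding W_def using W0(2) by (auto intro!: image_eqI[of _ _ \<one>])
  have Wsym: "\<And>a. a \<in> W \<Longrightarrow> inv a \<in> W"
  proof -
    fix a assume a: "a \<in> W"
    then obtain b where b: "b \<in> W0" "a = inv b" "a \<in> W0" unfolding W_def by blast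
    have "inv a = b" using b W0c by auto
    thus "inv a \<in> W" unfolding W_def using b by blast
  qed
  have Wc: "W \<subseteq> carrier G" unfolding W_def using W0c by blast
  have Wcube: "\<And>a b c. a \<in> W \<Longrightarrow> b \<in> W \<Longrightarrow> c \<in> W \<Longrightarrow> a \<otimes> b \<otimes> c \<in> U0"
    using W0(3) unfolding W_def by blast
  have "unit_nbhd G TG W" unfolding unit_nbhd_def using Wo W1 Wc topsp by blast
  then obtain A where A: "A \<subseteq> carrier G" "card_le A L" "A <#> W = carrier G"
    using ib unfolding ib_le_def by blast
  define Z where "Z a = {z \<in> carrier G. inv a \<otimes> z \<otimes> inv (inv a) \<in> W}" for a
  define gam where "gam = Z ` A"
  have "\<forall>V\<in>gam. unit_nbhd G TG V"
  proof
    fix V assume "V \<in> gam"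
    then obtain a where a: "a \<in> A" "V = Z a" unfolding gam_def by blast
    have ac: "a \<in> carrier G" using a A(1) by blast
    have "openin TG (Z a)" unfolding Z_def using open_conj[of "inv a" W] ac Wo by simp
    moreover have "\<one> \<in> Z a" unfolding Z_def using ac W1 by simp
    ultimately show "unit_nbhd G TG V" unfolding unit_nbhd_def Z_def a(2) using topsp
      by (auto simp: Z_def)
  qed
  moreover have "card_le gam L" unfolding gam_def card_le_def using A(2)[unfolded card_le_def] by (rule cImg)
  moreover have "\<forall>x\<in>carrier G. \<exists>V\<in>gam. (x <# V) #> inv x \<subseteq> U"
  proof
    fix x assume x: "x \<in> carrier G"
    have "inv x \<in> A <#> W" using A(3) x by simp
    then obtain a w where aw: "a \<in> A" "w \<in> W" "inv x = a \<otimes> w" unfolding set_mult_def by blast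
    have ac: "a \<in> carrier G" using aw A(1) by blast
    have wc: "w \<in> carrier G" using aw Wc by blast
    have xe: "x = inv w \<otimes> inv a"
    proof -
      have "x = inv (inv x)" using x by simp
      also have "\<dots> = inv w \<otimes> inv a" using aw(3) ac wc by (simp add: inv_mult_group)
      finally show ?thesis .
    qed
    have "(x <# Z a) #> inv x \<subseteq> U"
    proof
      fix y assume "y \<in> (x <# Z a) #> inv x"
      then obtain z where z: "z \<in> Z a" "y = x \<otimes> z \<otimes> inv x" unfolding l_coset_def r_coset_def by blast
      have zc: "z \<in> carrier G" using z(1) unfolding Z_def by blast
      have c: "inv a \<otimes> z \<otimes> a \<in> W" using z(1) ac unfolding Z_def by simp
      have "inv w \<otimes> (inv a \<otimes> z \<otimes> a) \<otimes> w \<in> U0" using Wcube[OF Wsym[OF aw(2)] c aw(2)] .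
      moreover have "inv w \<otimes> (inv a \<otimes> z \<otimes> a) \<otimes> w = y"
        using z(2) xe ac wc zc by (simp add: inv_mult_group m_assoc)
      ultimately show "y \<in> U" using U0(3) by auto
    qed
    thus "\<exists>V\<in>gam. (x <# V) #> inv x \<subseteq> U" using aw(1) unfolding gam_def by blast
  qed
  ultimately have c: "(\<forall>V\<in>gam. unit_nbhd G TG V) \<and> card_le gam L \<and> (\<forall>x\<in>carrier G. \<exists>V\<in>gam. (x <# V) #> inv x \<subseteq> U)"
    by blast
  show "\<exists>\<gamma>. (\<forall>V\<in>\<gamma>. unit_nbhd G TG V) \<and> card_le \<gamma> L \<and> (\<forall>x\<in>carrier G. \<exists>V\<in>\<gamma>. (x <# V) #> inv x \<subseteq> U)"
    by (rule exI[of _ gam]) (rule c)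
qed

end


unbundle cardinal_syntax

lemma ex_min_card': "P F0 \<Longrightarrow> \<exists>F. P F \<and> (\<forall>F'. P F' \<longrightarrow> |F| \<le>o |F'| )"
proof -
  assume "P F0"
  hence "Collect P \<noteq> {}" by blast
  from ex_min_card[OF this] obtain F where "F \<in> Collect P" "\<forall>F'\<in>Collect P. |F| \<le>o |F'|" by (elim bexE)
  thus ?thesis by blast
qed

locale cons = tgrp G TG for G (structure) and TG +
  fixes X :: "'x topology" and \<alpha>
  assumes GS: "G_space G TG X \<alpha>" and trans: "transitive_action G X \<alpha>"
begin

lemma acont: "continuous_map (prod_topology TG X) X (\<lambda>(g, x). \<alpha> g x)"
  using GS unfolding G_space_def by blast

lemma a_one: "y \<in> topspace X \<Longrightarrow> \<alpha> \<one> y = y"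
  using GS unfolding G_space_def by blast

definition x0 where "x0 = (SOME x. x \<in> topspace X)"
definition isbase where "isbase B \<longleftrightarrow> local_base_at X x0 B"
definition BB where "BB = (if topspace X = {} then {} else (SOME B. isbase B \<and> (\<forall>B'. isbase B' \<longrightarrow> |B| \<le>o |B'| )))"
definition Wf where "Wf Op = (SOME W. openin TG W \<and> \<one> \<in> W \<and> (\<exists>O2. openin X O2 \<and> x0 \<in> O2 \<and> (\<forall>w\<in>W. \<forall>z\<in>O2. \<alpha> w z \<in> Op)))"
definition cr where "cr V = (SOME W. openin TG W \<and> \<one> \<in> W \<and> (\<forall>a\<in>W. \<forall>b\<in>W. \<forall>c\<in>W. a \<otimes> b \<otimes> c \<in> V))"
definition good where "good V F \<longleftrightarrow> (\<forall>W\<in>F. openin TG W \<and> \<one> \<in> W) \<and> (\<forall>x\<in>carrier G. \<exists>W\<in>F. \<forall>w\<in>W. x \<otimes> w \<otimes> inv x \<in> V)"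
definition cf where "cf V = (SOME F. good V F \<and> (\<forall>F'. good V F' \<longrightarrow> |F| \<le>o |F'| ))"
definition step where "step S = S \<union> (\<lambda>(A, B). A \<inter> B) ` (S \<times> S) \<union> (\<lambda>V. (\<lambda>v. inv v) ` V) ` S \<union> cr ` S \<union> (\<Union>V\<in>S. cf V)"
definition gens where "gens = insert (carrier G) (Wf ` BB)"
definition Sn where "Sn n = (step ^^ n) gens"
definition VVc where "VVc = (\<Union>n. Sn n)"

lemma x0_in: "topspace X \<noteq> {} \<Longrightarrow> x0 \<in> topspace X"
  unfolding x0_def by (rule someI_ex) blast

lemma BB_props:
  assumes ne: "topspace X \<noteq> {}"
  shows "local_base_at X x0 BB \<and> (\<forall>B'. local_base_at X x0 B' \<longrightarrow> |BB| \<le>o |B'| )"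
proof -
  have "isbase {Op. openin X Op \<and> x0 \<in> Op}" unfolding isbase_def local_base_at_def by blast
  hence "\<exists>B. isbase B \<and> (\<forall>B'. isbase B' \<longrightarrow> |B| \<le>o |B'| )" by (rule ex_min_card')
  from someI_ex[OF this] show ?thesis unfolding BB_def isbase_def using ne by simp
qed

lemma BB_open: "Op \<in> BB \<Longrightarrow> openin X Op \<and> x0 \<in> Op"
proof -
  assume a: "Op \<in> BB"
  hence "topspace X \<noteq> {}" unfolding BB_def by auto
  thus ?thesis using BB_props a unfolding local_base_at_def by blast
qed

lemma Wf_props:
  assumes Op: "Op \<in> BB"
  shows "openin TG (Wf Op) \<and> \<one> \<in> Wf Op \<and> (\<exists>O2. openin X O2 \<and> x0 \<in> O2 \<and> (\<forall>w\<in>Wf Op. \<forall>z\<in>O2. \<alpha> w z \<in> Op))"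
proof -
  have Oo: "openin X Op" "x0 \<in> Op" using BB_open[OF Op] by auto
  have x0X: "x0 \<in> topspace X" using openin_subset[OF Oo(1)] Oo(2) by blast
  define S where "S = {p \<in> topspace (prod_topology TG X). (\<lambda>(g, x). \<alpha> g x) p \<in> Op}"
  have So: "openin (prod_topology TG X) S" unfolding S_def using openin_continuous_map_preimage[OF acont Oo(1)] .
  have "(\<one>, x0) \<in> S" unfolding S_def using x0X a_one[OF x0X] Oo(2) topsp by simp
  then obtain W O2 where WO: "openin TG W" "openin X O2" "\<one> \<in> W" "x0 \<in> O2" "W \<times> O2 \<subseteq> S"
    using So unfolding openin_prod_topology_alt by meson
  have "\<forall>w\<in>W. \<forall>z\<in>O2. \<alpha> w z \<in> Op"
  proof (intro ballI)
    fix w z assume "w \<in> W" "z \<in> O2"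
    hence "(w, z) \<in> S" using WO(5) by blast
    thus "\<alpha> w z \<in> Op" unfolding S_def by simp
  qed
  hence "\<exists>W. openin TG W \<and> \<one> \<in> W \<and> (\<exists>O2. openin X O2 \<and> x0 \<in> O2 \<and> (\<forall>w\<in>W. \<forall>z\<in>O2. \<alpha> w z \<in> Op))"
    using WO by blast
  from someI_ex[OF this] show ?thesis unfolding Wf_def .
qed

lemma cr_props:
  assumes "openin TG V" "\<one> \<in> V"
  shows "openin TG (cr V) \<and> \<one> \<in> cr V \<and> (\<forall>a\<in>cr V. \<forall>b\<in>cr V. \<forall>c\<in>cr V. a \<otimes> b \<otimes> c \<in> V)"
  unfolding cr_def by (rule someI_ex) (rule cube_root[OF assms])

lemma cf_props:
  assumes V: "openin TG V" "\<one> \<in> V"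
  shows "good V (cf V) \<and> (\<forall>F'. good V F' \<longrightarrow> |cf V| \<le>o |F'| )"
proof -
  define F0 where "F0 = (\<lambda>x. {w \<in> carrier G. x \<otimes> w \<otimes> inv x \<in> V}) ` carrier G"
  have "good V F0" unfolding good_def F0_def
  proof (intro conjI ballI)
    fix W assume "W \<in> (\<lambda>x. {w \<in> carrier G. x \<otimes> w \<otimes> inv x \<in> V}) ` carrier G"
    then obtain x where x: "x \<in> carrier G" "W = {w \<in> carrier G. x \<otimes> w \<otimes> inv x \<in> V}" by blast
    show "openin TG W" using open_conj[OF x(1) V(1)] x(2) by simp
    show "\<one> \<in> W" using x V(2) by simp
  next
    fix x assume x: "x \<in> carrier G"
    show "\<exists>W\<in>(\<lambda>x. {w \<in> carrier G. x \<otimes> w \<otimes> inv x \<in> V}) ` carrier G. \<forall>w\<in>W. x \<otimes> w \<otimes> inv x \<in> V"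
    proof (rule bexI[of _ "{w \<in> carrier G. x \<otimes> w \<otimes> inv x \<in> V}"])
      show "\<forall>w\<in>{w \<in> carrier G. x \<otimes> w \<otimes> inv x \<in> V}. x \<otimes> w \<otimes> inv x \<in> V" by simp
      show "{w \<in> carrier G. x \<otimes> w \<otimes> inv x \<in> V} \<in> (\<lambda>x. {w \<in> carrier G. x \<otimes> w \<otimes> inv x \<in> V}) ` carrier G"
        using x by (rule imageI)
    qed
  qed
  hence "\<exists>F. good V F \<and> (\<forall>F'. good V F' \<longrightarrow> |F| \<le>o |F'| )" by (rule ex_min_card')
  from someI_ex[OF this] show ?thesis unfolding cf_def .
qed

definition PP where "PP V \<longleftrightarrow> openin TG V \<and> \<one> \<in> V"

lemma gens_P: "V \<in> gens \<Longrightarrow> PP V"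
  unfolding gens_def PP_def using Wf_props topsp by (auto simp: openin_topspace[of TG, unfolded topsp])

lemma step_P: "(\<And>V. V \<in> S \<Longrightarrow> PP V) \<Longrightarrow> V \<in> step S \<Longrightarrow> PP V"
proof -
  assume P: "\<And>V. V \<in> S \<Longrightarrow> PP V" and V: "V \<in> step S"
  consider (a) "V \<in> S" | (b) "V \<in> (\<lambda>(A, B). A \<inter> B) ` (S \<times> S)" | (c) "V \<in> (\<lambda>V. (\<lambda>v. inv v) ` V) ` S"
    | (d) "V \<in> cr ` S" | (e) "V \<in> (\<Union>V\<in>S. cf V)" using V unfolding step_def by blast
  thus "PP V"
  proof cases
    case a thus ?thesis using P by blast
  next
    case b
    then obtain A B where "A \<in> S" "B \<in> S" "V = A \<inter> B" by blast
    thus ?thesis using P unfolding PP_def by (auto intro: openin_Int)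
  next
    case c
    then obtain W where W: "W \<in> S" "V = (\<lambda>v. inv v) ` W" by blast
    have "\<one> \<in> V" using P[OF W(1)] W(2) unfolding PP_def by (auto intro!: image_eqI[of _ _ \<one>])
    thus ?thesis using open_invimg P[OF W(1)] W(2) unfolding PP_def by blast
  next
    case d
    then obtain W where W: "W \<in> S" "V = cr W" by blast
    thus ?thesis using cr_props P[OF W(1)] unfolding PP_def by blast
  next
    case e
    then obtain W where W: "W \<in> S" "V \<in> cf W" by blast
    thus ?thesis using cf_props P[OF W(1)] unfolding PP_def good_def by blast
  qed
qed

lemma Sn_P: "V \<in> Sn n \<Longrightarrow> PP V"
proof (induction n arbitrary: V)
  case 0 thus ?case using gens_P by (simp add: Sn_def)
next
  case (Suc n)
  have "V \<in> step (Sn n)" using Suc.prems by (simp add: Sn_def)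
  thus ?case using step_P Suc.IH by blast
qed

lemma VV_P: "V \<in> VVc \<Longrightarrow> PP V" unfolding VVc_def using Sn_P by blast

lemma Sn_Suc: "Sn (Suc n) = step (Sn n)" by (simp add: Sn_def)

lemma step_sup: "S \<subseteq> step S" unfolding step_def by blast

lemma Sn_mono: "m \<le> n \<Longrightarrow> Sn m \<subseteq> Sn n"
proof (induction n rule: dec_induct)
  case (step n) thus ?case using step_sup[of "Sn n"] Sn_Suc by blast
qed simp

lemma VV_two: "A \<in> VVc \<Longrightarrow> B \<in> VVc \<Longrightarrow> \<exists>n. A \<in> Sn n \<and> B \<in> Sn n"
proof -
  assume "A \<in> VVc" "B \<in> VVc"
  then obtain i j where "A \<in> Sn i" "B \<in> Sn j" unfolding VVc_def by blast
  thus ?thesis using Sn_mono[of i "max i j"] Sn_mono[of j "max i j"] by auto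
qed

lemma VV_one: "V \<in> VVc \<Longrightarrow> \<exists>n. V \<in> Sn n" unfolding VVc_def by blast

lemma inSuc: "V \<in> step (Sn n) \<Longrightarrow> V \<in> VVc" unfolding VVc_def using Sn_Suc by (metis UNIV_I UN_I)

lemma tg: "tgrp G TG" by (intro tgrp.intro is_group tgrp_axioms)

lemma vfam_VV: "vfam G TG VVc"
proof (rule vfam.intro[OF tg], unfold_locales)
  fix V assume "V \<in> VVc" thus "openin TG V" using VV_P unfolding PP_def by blast
next
  fix V assume "V \<in> VVc" thus "\<one> \<in> V" using VV_P unfolding PP_def by blast
next
  fix A B assume "A \<in> VVc" "B \<in> VVc"
  then obtain n where n: "A \<in> Sn n" "B \<in> Sn n" using VV_two by blast
  hence "A \<inter> B \<in> step (Sn n)" unfolding step_def by blast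
  thus "A \<inter> B \<in> VVc" by (rule inSuc)
next
  fix V assume "V \<in> VVc"
  then obtain n where n: "V \<in> Sn n" using VV_one by blast
  hence "(\<lambda>v. inv v) ` V \<in> step (Sn n)" unfolding step_def by blast
  thus "(\<lambda>v. inv v) ` V \<in> VVc" by (rule inSuc)
next
  fix V assume V: "V \<in> VVc"
  then obtain n where n: "V \<in> Sn n" using VV_one by blast
  hence "cr V \<in> step (Sn n)" unfolding step_def by blast
  hence "cr V \<in> VVc" by (rule inSuc)
  moreover have "\<forall>a\<in>cr V. \<forall>b\<in>cr V. \<forall>c\<in>cr V. a \<otimes> b \<otimes> c \<in> V" using cr_props VV_P[OF V] unfolding PP_def by blast
  ultimately show "\<exists>W\<in>VVc. \<forall>a\<in>W. \<forall>b\<in>W. \<forall>c\<in>W. a \<otimes> b \<otimes> c \<in> V" by blast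
next
  fix V x assume V: "V \<in> VVc" and x: "x \<in> carrier G"
  then obtain n where n: "V \<in> Sn n" using VV_one by blast
  have "good V (cf V)" using cf_props VV_P[OF V] unfolding PP_def by blast
  then obtain W where W: "W \<in> cf V" "\<forall>w\<in>W. x \<otimes> w \<otimes> inv x \<in> V" using x unfolding good_def by blast
  have "W \<in> step (Sn n)" using n W(1) unfolding step_def by blast
  hence "W \<in> VVc" by (rule inSuc)
  thus "\<exists>W\<in>VVc. \<forall>w\<in>W. x \<otimes> w \<otimes> inv x \<in> V" using W(2) by blast
next
  have "carrier G \<in> Sn 0" unfolding Sn_def gens_def by simp
  thus "carrier G \<in> VVc" unfolding VVc_def by blast
qed

end


unbundle cardinal_syntax

context cons begin

sublocale V: vfam G TG VVc by (rule vfam_VV)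

lemma a_in: "g \<in> carrier G \<Longrightarrow> y \<in> topspace X \<Longrightarrow> \<alpha> g y \<in> topspace X"
proof -
  assume "g \<in> carrier G" "y \<in> topspace X"
  hence "(g, y) \<in> topspace (prod_topology TG X)" using topsp by simp
  thus ?thesis using continuous_map_image_subset_topspace[OF acont] by force
qed

lemma a_mult: "g \<in> carrier G \<Longrightarrow> h \<in> carrier G \<Longrightarrow> y \<in> topspace X \<Longrightarrow> \<alpha> (g \<otimes> h) y = \<alpha> g (\<alpha> h y)"
  using GS unfolding G_space_def by blast

lemma a_cont1: "g \<in> carrier G \<Longrightarrow> continuous_map X X (\<alpha> g)"
proof -
  assume g: "g \<in> carrier G"
  have "continuous_map X (prod_topology TG X) (\<lambda>z. (g, z))"
    using g topsp by (auto intro!: continuous_map_pairedI)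
  from continuous_map_compose[OF this acont] show ?thesis by (simp add: o_def)
qed

lemma Wf_VV: "Op \<in> BB \<Longrightarrow> Wf Op \<in> VVc"
proof -
  assume "Op \<in> BB"
  hence "Wf Op \<in> Sn 0" unfolding Sn_def gens_def by simp
  thus ?thesis unfolding VVc_def by blast
qed

lemma kern: "m \<in> V.MM \<Longrightarrow> y \<in> topspace X \<Longrightarrow> \<alpha> m y = y"
proof -
  assume m: "m \<in> V.MM" and y: "y \<in> topspace X"
  have ne: "topspace X \<noteq> {}" using y by blast
  have x0: "x0 \<in> topspace X" using x0_in[OF ne] .
  have mc: "m \<in> carrier G" using m V.MM_carrier by blast
  have base: "local_base_at X x0 BB" using BB_props[OF ne] by blast
  have t1: "t1_space X" using GS unfolding G_space_def tychonoff_space_def by blast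
  have fix0: "\<alpha> m x0 = x0"
  proof (rule ccontr)
    assume ne0: "\<alpha> m x0 \<noteq> x0"
    have "\<alpha> m x0 \<in> topspace X" using a_in[OF mc x0] .
    then obtain U where U: "openin X U" "x0 \<in> U" "\<alpha> m x0 \<notin> U"
      using t1 x0 ne0 unfolding t1_space_def by metis
    then obtain Op where Op: "Op \<in> BB" "Op \<subseteq> U" using base unfolding local_base_at_def by blast
    obtain O2 where O2: "openin X O2" "x0 \<in> O2" "\<forall>w\<in>Wf Op. \<forall>z\<in>O2. \<alpha> w z \<in> Op"
      using Wf_props[OF Op(1)] by blast
    have "m \<in> Wf Op" using m V.MM_sub_V[OF Wf_VV[OF Op(1)]] by blast
    hence "\<alpha> m x0 \<in> Op" using O2 by blast
    thus False using Op(2) U(3) by blast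
  qed
  have "y \<in> (\<lambda>g. \<alpha> g x0) ` carrier G" using trans x0 y unfolding transitive_action_def by blast
  then obtain k where k: "k \<in> carrier G" "y = \<alpha> k x0" by blast
  define j where "j = inv k \<otimes> m \<otimes> inv (inv k)"
  have jM: "j \<in> V.MM" using V.MM_normal unfolding normal_inv_iff j_def using k(1) m by blast
  have jc: "j \<in> carrier G" using jM V.MM_carrier by blast
  have fixj: "\<alpha> j x0 = x0"
  proof -
    have "j \<in> V.MM" by (rule jM)
    thus ?thesis using fix0
    proof -
      show ?thesis
      proof (rule ccontr)
        assume ne0: "\<alpha> j x0 \<noteq> x0"
        have "\<alpha> j x0 \<in> topspace X" using a_in[OF jc x0] .
        then obtain U where U: "openin X U" "x0 \<in> U" "\<alpha> j x0 \<notin> U"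
          using t1 x0 ne0 unfolding t1_space_def by metis
        then obtain Op where Op: "Op \<in> BB" "Op \<subseteq> U" using base unfolding local_base_at_def by blast
        obtain O2 where O2: "openin X O2" "x0 \<in> O2" "\<forall>w\<in>Wf Op. \<forall>z\<in>O2. \<alpha> w z \<in> Op"
          using Wf_props[OF Op(1)] by blast
        have "j \<in> Wf Op" using jM V.MM_sub_V[OF Wf_VV[OF Op(1)]] by blast
        hence "\<alpha> j x0 \<in> Op" using O2 by blast
        thus False using Op(2) U(3) by blast
      qed
    qed
  qed
  have e: "m \<otimes> k = k \<otimes> j" unfolding j_def using mc k(1) by (simp add: m_assoc V.cancel1)
  have "\<alpha> m y = \<alpha> (m \<otimes> k) x0" using k mc x0 by (simp add: a_mult)
  also have "\<dots> = \<alpha> k (\<alpha> j x0)" using e k(1) jc x0 by (simp add: a_mult)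
  also have "\<dots> = y" using fixj k by simp
  finally show ?thesis .
qed

lemma cond:
  assumes g0: "g0 \<in> carrier G" and y0: "y0 \<in> topspace X" and Op: "openin X Op" and gy: "\<alpha> g0 y0 \<in> Op"
  shows "\<exists>V\<in>VVc. \<exists>O3. openin X O3 \<and> y0 \<in> O3 \<and> (\<forall>v\<in>V. \<forall>y\<in>O3. \<alpha> (g0 \<otimes> v) y \<in> Op)"
proof -
  have ne: "topspace X \<noteq> {}" using y0 by blast
  have x0: "x0 \<in> topspace X" using x0_in[OF ne] .
  have base: "local_base_at X x0 BB" using BB_props[OF ne] by blast
  have "y0 \<in> (\<lambda>g. \<alpha> g x0) ` carrier G" using trans x0 y0 unfolding transitive_action_def by blast
  then obtain k where k: "k \<in> carrier G" "y0 = \<alpha> k x0" by blast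
  have gk: "g0 \<otimes> k \<in> carrier G" using g0 k by simp
  define Ok where "Ok = {z \<in> topspace X. \<alpha> (g0 \<otimes> k) z \<in> Op}"
  have Oko: "openin X Ok" unfolding Ok_def using openin_continuous_map_preimage[OF a_cont1[OF gk] Op] .
  have "x0 \<in> Ok" unfolding Ok_def using x0 gy k g0 by (simp add: a_mult)
  then obtain Ob where Ob: "Ob \<in> BB" "Ob \<subseteq> Ok" using base Oko unfolding local_base_at_def by blast
  obtain O2 where O2: "openin X O2" "x0 \<in> O2" "\<forall>w\<in>Wf Ob. \<forall>z\<in>O2. \<alpha> w z \<in> Ob"
    using Wf_props[OF Ob(1)] by blast
  obtain V where V: "V \<in> VVc" "\<forall>v\<in>V. inv k \<otimes> v \<otimes> inv (inv k) \<in> Wf Ob"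
    using V.V_conj[OF Wf_VV[OF Ob(1)], of "inv k"] k by blast
  define O3 where "O3 = {y \<in> topspace X. \<alpha> (inv k) y \<in> O2}"
  have O3o: "openin X O3" unfolding O3_def using openin_continuous_map_preimage[OF a_cont1 O2(1)] k by simp
  have "\<alpha> (inv k) y0 = x0" using k x0 by (simp add: a_mult[symmetric] a_one)
  hence y0O3: "y0 \<in> O3" unfolding O3_def using y0 O2(2) by simp
  have "\<forall>v\<in>V. \<forall>y\<in>O3. \<alpha> (g0 \<otimes> v) y \<in> Op"
  proof (intro ballI)
    fix v y assume v: "v \<in> V" and y: "y \<in> O3"
    have vc: "v \<in> carrier G" using V.V_mem V(1) v by blast
    have yX: "y \<in> topspace X" and y2: "\<alpha> (inv k) y \<in> O2" using y unfolding O3_def by auto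
    have c: "inv k \<otimes> v \<otimes> k \<in> Wf Ob" using V(2) v k by simp
    have "\<alpha> (inv k \<otimes> v \<otimes> k) (\<alpha> (inv k) y) \<in> Ob" using O2(3) c y2 by blast
    hence "\<alpha> (inv k \<otimes> v \<otimes> k) (\<alpha> (inv k) y) \<in> Ok" using Ob(2) by blast
    hence "\<alpha> (g0 \<otimes> k) (\<alpha> (inv k \<otimes> v \<otimes> k) (\<alpha> (inv k) y)) \<in> Op" unfolding Ok_def by blast
    moreover have "\<alpha> (g0 \<otimes> k) (\<alpha> (inv k \<otimes> v \<otimes> k) (\<alpha> (inv k) y)) = \<alpha> (g0 \<otimes> v) y"
    proof -
      have "\<alpha> (g0 \<otimes> k) (\<alpha> (inv k \<otimes> v \<otimes> k) (\<alpha> (inv k) y)) = \<alpha> ((g0 \<otimes> k) \<otimes> (inv k \<otimes> v \<otimes> k) \<otimes> inv k) y"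
        using g0 k vc yX a_in by (simp add: a_mult)
      also have "(g0 \<otimes> k) \<otimes> (inv k \<otimes> v \<otimes> k) \<otimes> inv k = g0 \<otimes> v"
        using g0 k vc by (simp add: m_assoc V.cancel1)
      finally show ?thesis .
    qed
    ultimately show "\<alpha> (g0 \<otimes> v) y \<in> Op" by simp
  qed
  thus ?thesis using V(1) O3o y0O3 by blast
qed

sublocale A: vact G TG VVc X \<alpha>
  by (rule vact.intro[OF vfam_VV], unfold_locales) (auto intro: GS trans kern cond)

end


unbundle cardinal_syntax

context cons begin

lemma cf_bound:
  assumes V: "openin TG V" "\<one> \<in> V" and invL: "inv_le G TG L"
  shows "|cf V| \<le>o |L|"
proof -
  have "unit_nbhd G TG V" unfolding unit_nbhd_def using V openin_subset by blast
  then obtain gm where gm: "\<forall>W\<in>gm. unit_nbhd G TG W" "card_le gm L"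
      "\<forall>x\<in>carrier G. \<exists>W\<in>gm. (x <# W) #> inv x \<subseteq> V"
    using invL unfolding inv_le_def by blast
  define int where "int W = (SOME W'. openin TG W' \<and> \<one> \<in> W' \<and> W' \<subseteq> W)" for W
  have int: "openin TG (int W) \<and> \<one> \<in> int W \<and> int W \<subseteq> W" if "W \<in> gm" for W
  proof -
    have "\<exists>W'. openin TG W' \<and> \<one> \<in> W' \<and> W' \<subseteq> W" using gm(1) that unfolding unit_nbhd_def by blast
    from someI_ex[OF this] show ?thesis unfolding int_def .
  qed
  have "good V (int ` gm)" unfolding good_def
  proof (intro conjI ballI)
    fix W assume "W \<in> int ` gm"
    thus "openin TG W" using int by blast
  next
    fix W assume "W \<in> int ` gm"
    thus "\<one> \<in> W" using int by blast
  next
    fix x assume x: "x \<in> carrier G"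
    then obtain W where W: "W \<in> gm" "(x <# W) #> inv x \<subseteq> V" using gm(3) by blast
    have "\<forall>w\<in>int W. x \<otimes> w \<otimes> inv x \<in> V"
    proof
      fix w assume "w \<in> int W"
      hence "w \<in> W" using int[OF W(1)] by blast
      hence "x \<otimes> w \<otimes> inv x \<in> (x <# W) #> inv x" unfolding l_coset_def r_coset_def by blast
      thus "x \<otimes> w \<otimes> inv x \<in> V" using W(2) by blast
    qed
    thus "\<exists>W\<in>int ` gm. \<forall>w\<in>W. x \<otimes> w \<otimes> inv x \<in> V" using W(1) by blast
  qed
  hence "|cf V| \<le>o |int ` gm|" using cf_props[OF V] by blast
  moreover have "|int ` gm| \<le>o |L|" using gm(2) unfolding card_le_def by (rule cImg)
  ultimately show ?thesis by (rule ordLeq_transitive)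
qed

lemma card_VV:
  assumes chK: "character_le X K" and invL: "inv_le G TG L"
  shows "card_le VVc (K \<times> L)"
proof -
  define C where "C = K \<times> L"
  have Kinf: "infinite K" using chK unfolding character_le_def by blast
  have Linf: "infinite L" using invL unfolding inv_le_def by blast
  have infC: "infinite C" unfolding C_def using infinite_cartesian_product[OF Kinf Linf] .
  have Lne: "L \<noteq> {}" using Linf by auto
  have Kne: "K \<noteq> {}" using Kinf by auto
  have KC: "|K| \<le>o |C|" unfolding C_def by (rule card_of_Times1[OF Lne])
  have LC: "|L| \<le>o |C|" unfolding C_def by (rule card_of_Times2[OF Kne])
  have BBK: "|BB| \<le>o |K|"
  proof (cases "topspace X = {}")
    case True thus ?thesis unfolding BB_def by (simp add: card_of_empty)
  next
    case False
    have x0: "x0 \<in> topspace X" using x0_in[OF False] .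
    then obtain B' where B': "local_base_at X x0 B'" "card_le B' K" using chK unfolding character_le_def by blast
    have "|BB| \<le>o |B'|" using BB_props[OF False] B'(1) by blast
    thus ?thesis using ordLeq_transitive B'(2)[unfolded card_le_def] by blast
  qed
  have genC: "|gens| \<le>o |C|" unfolding gens_def
    by (rule cIns[OF infC], rule cImg, rule ordLeq_transitive[OF BBK KC])
  have stepC: "|step S| \<le>o |C|" if SC: "|S| \<le>o |C|" and SP: "\<And>V. V \<in> S \<Longrightarrow> PP V" for S
  proof -
    have a: "|(\<lambda>(A, B). A \<inter> B) ` (S \<times> S)| \<le>o |C|" by (rule cImg, rule cTimes[OF infC SC SC])
    have b: "|(\<lambda>V. (\<lambda>v. inv v) ` V) ` S| \<le>o |C|" by (rule cImg[OF SC])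
    have c: "|cr ` S| \<le>o |C|" by (rule cImg[OF SC])
    have d: "|\<Union>V\<in>S. cf V| \<le>o |C|"
    proof (rule card_of_UNION_ordLeq_infinite[OF infC SC], intro ballI)
      fix V assume "V \<in> S"
      hence "openin TG V" "\<one> \<in> V" using SP unfolding PP_def by blast+
      hence "|cf V| \<le>o |L|" using cf_bound invL by blast
      thus "|cf V| \<le>o |C|" using ordLeq_transitive LC by blast
    qed
    show ?thesis unfolding step_def
      by (intro cUn[OF infC] SC a b c d)
  qed
  have SnC: "|Sn n| \<le>o |C|" for n
  proof (induction n)
    case 0 thus ?case using genC by (simp add: Sn_def)
  next
    case (Suc n)
    thus ?case using stepC[OF Suc] Sn_P by (simp add: Sn_Suc)
  qed
  have "|VVc| \<le>o |C|" unfolding VVc_def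
  proof (rule card_of_UNION_ordLeq_infinite[OF infC])
    show "|UNIV :: nat set| \<le>o |C|" using infC by (simp only: infinite_iff_card_of_nat)
    show "\<forall>i\<in>UNIV. |Sn i| \<le>o |C|" using SnC by blast
  qed
  thus ?thesis unfolding card_le_def C_def .
qed

lemma main_conj:
  "G_space V.HH V.TH X A.gam \<and> transitive_action V.HH X A.gam \<and>
   (\<forall>(K :: 'k set) (L :: 'l set). character_le X K \<and> inv_le G TG L \<longrightarrow> character_le V.TH (K \<times> L)) \<and>
   (\<forall>K :: 'k set. ib_le G TG K \<longrightarrow> ib_le V.HH V.TH K) \<and>
   (\<forall>(K :: 'k set) (L :: 'l set). character_le X K \<and> ib_le G TG L \<longrightarrow> weight_le V.TH (K \<times> L)) \<and>
   equivariant_pair G TG V.HH V.TH X \<alpha> A.gam V.phi \<and> V.phi ` carrier G = carrier V.HH"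
proof (intro conjI allI impI)
  show "G_space V.HH V.TH X A.gam" by (rule A.GS_HH)
  show "transitive_action V.HH X A.gam" by (rule A.trans_HH)
  show "equivariant_pair G TG V.HH V.TH X \<alpha> A.gam V.phi" by (rule A.equiv_HH)
  show "V.phi ` carrier G = carrier V.HH" by (rule A.onto_HH)
next
  fix K :: "'k set" and L :: "'l set"
  assume a: "character_le X K \<and> inv_le G TG L"
  have Kinf: "infinite K" using a unfolding character_le_def by blast
  have Linf: "infinite L" using a unfolding inv_le_def by blast
  show "character_le V.TH (K \<times> L)"
    using V.char_HH[OF card_VV[OF conjunct1[OF a] conjunct2[OF a]] infinite_cartesian_product[OF Kinf Linf]] .
next
  fix K :: "'k set" assume "ib_le G TG K"
  thus "ib_le V.HH V.TH K" by (rule V.ib_HH)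
next
  fix K :: "'k set" and L :: "'l set"
  assume a: "character_le X K \<and> ib_le G TG L"
  have Kinf: "infinite K" using a unfolding character_le_def by blast
  have Linf: "infinite L" using a unfolding ib_le_def by blast
  have invL: "inv_le G TG L" using ib_inv conjunct2[OF a] by blast
  have Kne: "K \<noteq> {}" using Kinf by auto
  have LC: "card_le L (K \<times> L)" unfolding card_le_def by (rule card_of_Times2[OF Kne])
  show "weight_le V.TH (K \<times> L)"
    using V.weight_HH[OF card_VV[OF conjunct1[OF a] invL] infinite_cartesian_product[OF Kinf Linf] conjunct2[OF a] LC] .
qed

end

theorem theorem3p9:
  fixes G :: "('g, 'b) monoid_scheme" and TG :: "'g topology"
    and X :: "'a topology" and \<alpha> :: "'g \<Rightarrow> 'a \<Rightarrow> 'a"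
  assumes "G_space G TG X \<alpha>" and "transitive_action G X \<alpha>"
  shows "\<exists>(H :: 'g set monoid) (TH :: 'g set topology) (\<gamma> :: 'g set \<Rightarrow> 'a \<Rightarrow> 'a)
            (\<phi> :: 'g \<Rightarrow> 'g set).
           G_space H TH X \<gamma> \<and> transitive_action H X \<gamma> \<and>
           (\<forall>(K :: 'k set) (L :: 'l set). character_le X K \<and> inv_le G TG L
                \<longrightarrow> character_le TH (K \<times> L)) \<and>
           (\<forall>K :: 'k set. ib_le G TG K \<longrightarrow> ib_le H TH K) \<and>
           (\<forall>(K :: 'k set) (L :: 'l set). character_le X K \<and> ib_le G TG L
                \<longrightarrow> weight_le TH (K \<times> L)) \<and>
           equivariant_pair G TG H TH X \<alpha> \<gamma> \<phi> \<and>
           \<phi> ` carrier G = carrier H"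
proof -
  have tg: "topological_group G TG" using assms(1) unfolding G_space_def by blast
  have c: "cons G TG X \<alpha>"
  proof (rule cons.intro)
    show "tgrp G TG" using tg unfolding topological_group_def
      by (intro tgrp.intro tgrp_axioms.intro) auto
    show "cons_axioms G TG X \<alpha>" using assms by (rule cons_axioms.intro)
  qed
  interpret C: cons G TG X \<alpha> by (rule c)
  have m: "G_space C.V.HH C.V.TH X C.A.gam \<and> transitive_action C.V.HH X C.A.gam \<and>
   (\<forall>(K :: 'k set) (L :: 'l set). character_le X K \<and> inv_le G TG L \<longrightarrow> character_le C.V.TH (K \<times> L)) \<and>
   (\<forall>K :: 'k set. ib_le G TG K \<longrightarrow> ib_le C.V.HH C.V.TH K) \<and>
   (\<forall>(K :: 'k set) (L :: 'l set). character_le X K \<and> ib_le G TG L \<longrightarrow> weight_le C.V.TH (K \<times> L)) \<and>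
   equivariant_pair G TG C.V.HH C.V.TH X \<alpha> C.A.gam C.V.phi \<and> C.V.phi ` carrier G = carrier C.V.HH"
    by (rule C.main_conj)
  show ?thesis
    by (rule exI[of _ C.V.HH], rule exI[of _ C.V.TH], rule exI[of _ C.A.gam], rule exI[of _ C.V.phi]) (rule m)
qed



end
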